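(* Let $\mathbf{v}\in\mathrm{GF}(q^m)^n$ have rank $r\ge0$ and let $\mathcal{L}=\langle\mathbf{v}\rangle^\perp$. Then the rank weight enumerator of $\mathcal{L}$ depends only on $r$ and is $$W^{\mathrm{R}}_{\mathcal{L}}(x,y)=q^{-m}\Big\{\big[x+(q^m-1)y\big]^{[n]}+(q^m-1)(x-y)^{[r]}*\big[x+(q^m-1)y\big]^{[n-r]}\Big\}.$$
   Context: $q$ is a prime power. For $\mathbf{x}\in\mathrm{GF}(q^m)^n$, $\mathrm{rk}(\mathbf{x})$ is the dimension over $\mathrm{GF}(q)$ of the $\mathrm{GF}(q)$-span of its coordinates in $\mathrm{GF}(q^m)$. $\langle\mathbf{v}\rangle=\{a\mathbf{v}:a\in\mathrm{GF}(q^m)\}$ and $S^\perp=\{\mathbf{u}\in\mathrm{GF}(q^m)^n:\sum_iu_is_i=0\ \forall\mathbf{s}\in S\}$. The rank weight enumerator of $\mathcal{C}\subseteq\mathrm{GF}(q^m)^n$ is $\sum_{\mathbf{c}\in\mathcal{C}}y^{\mathrm{rk}(\mathbf{c})}x^{n-\mathrm{rk}(\mathbf{c})}$. $q$-product: for homogeneous polynomials $a(x,y;m)=\sum_{i=0}^r a_i(m)y^ix^{r-i}$ and $b(x,y;m)=\sum_{j=0}^s b_j(m)y^jx^{s-j}$ of degrees $r,s$, with coefficients real functions of $m$ (zero for indices outside the given ranges), $a*b=\sum_{u=0}^{r+s}c_u(m)y^ux^{r+s-u}$ with $c_u(m)=\sum_{i=0}^uq^{is}a_i(m)b_{u-i}(m-i)$.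 $q$-powers: $a^{[0]}=1$, $a^{[l]}=a^{[l-1]}*a$. Here $x+(q^m-1)y$ has coefficients $a_0(m)=1$, $a_1(m)=q^m-1$, and $x-y$ has coefficients $1,-1$. *)

theory Defs
  imports Complex_Main
begin

(* F is a subfield of the field 'a (here: GF(q) inside GF(q^m)) *)
definition is_subfield :: "'a::field set \<Rightarrow> bool" where
  "is_subfield F \<longleftrightarrow> 0 \<in> F \<and> 1 \<in> F \<and>
     (\<forall>a\<in>F. \<forall>b\<in>F. a + b \<in> F \<and> a * b \<in> F \<and> - a \<in> F) \<and>
     (\<forall>a\<in>F. a \<noteq> 0 \<longrightarrow> inverse a \<in> F)"

definition Fspan :: "'a::field set \<Rightarrow> 'a set \<Rightarrow> 'a set" where
  "Fspan F S = {y. \<exists>T c. finite T \<and> T \<subseteq> S \<and> (\<forall>t\<in>T. c t \<in> F) \<and> y = (\<Sum>t\<in>T. c t * t)}"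

definition Fdim :: "'a::field set \<Rightarrow> 'a set \<Rightarrow> nat" where
  "Fdim F S = (LEAST k. \<exists>B. finite B \<and> card B = k \<and> B \<subseteq> Fspan F S \<and> Fspan F B = Fspan F S)"

(* vectors of length n: functions nat => 'a vanishing outside {..<n} *)
definition vecs :: "nat \<Rightarrow> (nat \<Rightarrow> 'a::zero) set" where
  "vecs n = {x. \<forall>i\<ge>n. x i = 0}"

definition rk :: "'a::field set \<Rightarrow> nat \<Rightarrow> (nat \<Rightarrow> 'a) \<Rightarrow> nat" where
  "rk F n x = Fdim F (x ` {..<n})"

definition span1 :: "(nat \<Rightarrow> 'a::field) \<Rightarrow> (nat \<Rightarrow> 'a) set" where
  "span1 v = {(\<lambda>i. a * v i) | a. True}"

definition perp :: "nat \<Rightarrow> (nat \<Rightarrow> 'a::field) set \<Rightarrow> (nat \<Rightarrow> 'a) set" where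
  "perp n S = {u \<in> vecs n. \<forall>s\<in>S. (\<Sum>i<n. u i * s i) = 0}"

(* Homogeneous polynomials sum_i a_i(m) y^i x^(deg-i): pair (deg, a),
   a :: nat => int => real, coefficient index then parameter m. *)
type_synonym hpoly = "nat \<times> (nat \<Rightarrow> int \<Rightarrow> real)"

definition qprod :: "real \<Rightarrow> hpoly \<Rightarrow> hpoly \<Rightarrow> hpoly" where
  "qprod q A B = (case A of (r, a) \<Rightarrow> case B of (s, b) \<Rightarrow>
     (r + s, \<lambda>u m. if u \<le> r + s then
        (\<Sum>i\<le>u. q ^ (i * s) * (if i \<le> r then a i m else 0)
                 * (if u - i \<le> s then b (u - i) (m - int i) else 0))
      else 0))"

fun qpow :: "real \<Rightarrow> hpoly \<Rightarrow> nat \<Rightarrow> hpoly" where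
  "qpow q p 0 = (0, \<lambda>i m. if i = 0 then 1 else 0)"
| "qpow q p (Suc l) = qprod q (qpow q p l) p"

(* x + (q^m - 1) y *)
definition hp_A :: "real \<Rightarrow> hpoly" where
  "hp_A q = (1, \<lambda>i m. if i = 0 then 1 else if i = 1 then q powi m - 1 else 0)"

(* x - y *)
definition hp_B :: "hpoly" where
  "hp_B = (1, \<lambda>i m. if i = 0 then 1 else if i = 1 then -1 else 0)"

definition hp_eval :: "hpoly \<Rightarrow> int \<Rightarrow> real \<Rightarrow> real \<Rightarrow> real" where
  "hp_eval p m x y = (\<Sum>u\<le>fst p. snd p u m * y ^ u * x ^ (fst p - u))"

definition rank_weight_enum :: "'a::field set \<Rightarrow> nat \<Rightarrow> (nat \<Rightarrow> 'a) set \<Rightarrow> real \<Rightarrow> real \<Rightarrow> real" where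
  "rank_weight_enum F n C x y = (\<Sum>c\<in>C. y ^ rk F n c * x ^ (n - rk F n c))"

end

theory Submission
  imports Defs
begin


definition wfp :: "hpoly \<Rightarrow> bool" where
  "wfp p \<longleftrightarrow> (\<forall>u m. fst p < u \<longrightarrow> snd p u m = 0)"

lemma qprod_fst[simp]: "fst (qprod q A B) = fst A + fst B"
  by (simp add: qprod_def split: prod.splits)

lemma qprod_wf[simp]: "wfp (qprod q A B)"
  by (simp add: wfp_def qprod_def split: prod.splits)

lemma qprod_snd:
  assumes "wfp A" "wfp B"
  shows "snd (qprod q A B) u m =
    (\<Sum>i\<le>u. q ^ (i * fst B) * snd A i m * snd B (u - i) (m - int i))"
proof -
  obtain r a s b where AB: "A = (r, a)" "B = (s, b)" by (cases A, cases B)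
  have a: "(if i \<le> r then a i m' else 0) = a i m'" for i m'
    using assms(1) AB unfolding wfp_def by auto
  have b: "(if i \<le> s then b i m' else 0) = b i m'" for i m'
    using assms(2) AB unfolding wfp_def by auto
  have "snd (qprod q A B) u m = (if u \<le> r + s then
        (\<Sum>i\<le>u. q ^ (i * s) * (if i \<le> r then a i m else 0)
                 * (if u - i \<le> s then b (u - i) (m - int i) else 0)) else 0)"
    by (simp add: AB qprod_def)
  also have "\<dots> = (if u \<le> r + s then
        (\<Sum>i\<le>u. q ^ (i * s) * a i m * b (u - i) (m - int i)) else 0)"
    by (simp only: a b)
  also have "\<dots> = (\<Sum>i\<le>u. q ^ (i * s) * a i m * b (u - i) (m - int i))"
  proof (cases "u \<le> r + s")
    case False
    have "\<forall>i\<le>u. q ^ (i * s) * a i m * b (u - i) (m - int i) = 0"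
    proof (intro allI impI)
      fix i assume "i \<le> u"
      then have "r < i \<or> s < u - i" using False by auto
      then show "q ^ (i * s) * a i m * b (u - i) (m - int i) = 0"
        using assms AB unfolding wfp_def by auto
    qed
    then have "(\<Sum>i\<le>u. q ^ (i * s) * a i m * b (u - i) (m - int i)) = 0"
      by (intro sum.neutral) blast
    then show ?thesis using False by simp
  qed simp
  finally show ?thesis by (simp add: AB)
qed

lemma unit_wf[simp]: "wfp (0, \<lambda>i m. if i = 0 then 1 else 0)"
  by (auto simp: wfp_def)

lemma qpow_wf[simp]: "wfp (qpow q p l)"
  by (cases l) (simp_all del: qpow.simps(2) add: qpow.simps(2)[of q p])

lemma qpow_fst[simp]: "fst (qpow q p l) = l * fst p"
  by (induct l) auto

lemma hpA_wf[simp]: "wfp (hp_A q)" and hpA_fst[simp]: "fst (hp_A q) = 1"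
  by (auto simp: wfp_def hp_A_def)
lemma hpB_wf[simp]: "wfp hp_B" and hpB_fst[simp]: "fst hp_B = 1"
  by (auto simp: wfp_def hp_B_def)

lemma hpoly_eqI:
  assumes "fst A = fst B" "\<And>u m. snd A u m = snd B u m"
  shows "A = B"
  using assms by (metis prod_eqI ext)

lemma qprod_assoc:
  assumes X: "wfp X" and Y: "wfp Y" and Z: "wfp Z"
  shows "qprod q (qprod q X Y) Z = qprod q X (qprod q Y Z)"
proof (rule hpoly_eqI)
  show "fst (qprod q (qprod q X Y) Z) = fst (qprod q X (qprod q Y Z))" by simp
  fix u m
  define r where "r = fst X"
  define s where "s = fst Y"
  define t where "t = fst Z"
  define G where "G = (\<lambda>i l. q ^ (i * s + (i + l) * t) * snd X i m * snd Y l (m - int i)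
                     * snd Z (u - (i + l)) (m - int (i + l)))"
  have "snd (qprod q (qprod q X Y) Z) u m =
     (\<Sum>j\<le>u. q ^ (j * t) * (\<Sum>i\<le>j. q ^ (i * s) * snd X i m * snd Y (j - i) (m - int i))
        * snd Z (u - j) (m - int j))"
    using X Y Z by (simp add: qprod_snd s_def t_def)
  also have "\<dots> = (\<Sum>j\<le>u. \<Sum>i\<le>j. G i (j - i))"
    by (auto simp: G_def sum_distrib_left sum_distrib_right power_add intro!: sum.cong)
  also have "\<dots> = (\<Sum>(i,l)\<in>{(i,l). i + l \<le> u}. G i l)"
    by (rule sum.triangle_reindex_eq[symmetric])
  also have "{(i,l). i + l \<le> u} = Sigma {..u} (\<lambda>i. {..u - i})" by auto
  also have "(\<Sum>(i,l)\<in>Sigma {..u} (\<lambda>i. {..u - i}). G i l) = (\<Sum>i\<le>u. \<Sum>l\<le>u-i. G i l)"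
    by (rule sum.Sigma[symmetric]) auto
  also have "\<dots> = (\<Sum>i\<le>u. q ^ (i * (s + t)) * snd X i m *
      (\<Sum>l\<le>u - i. q ^ (l * t) * snd Y l (m - int i) * snd Z (u - i - l) (m - int i - int l)))"
    by (auto simp: G_def sum_distrib_left power_add algebra_simps intro!: sum.cong)
  also have "\<dots> = snd (qprod q X (qprod q Y Z)) u m"
    using X Y Z by (simp add: qprod_snd s_def t_def mult.assoc)
  finally show "snd (qprod q (qprod q X Y) Z) u m = snd (qprod q X (qprod q Y Z)) u m" .
qed

lemma qprod_unit_right:
  assumes "wfp X" shows "qprod q X (qpow q p 0) = X"
proof (rule hpoly_eqI)
  fix u m
  let ?U = "(0::nat, \<lambda>(i::nat) (m::int). if i = 0 then 1 else (0::real))"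
  have "snd (qprod q X ?U) u m = (\<Sum>i\<le>u. q ^ (i * fst ?U) * snd X i m * snd ?U (u - i) (m - int i))"
    using assms by (rule qprod_snd) simp
  also have "\<dots> = (\<Sum>i\<le>u. (if i = u then snd X i m else 0))"
    by (rule sum.cong) auto
  finally show "snd (qprod q X (qpow q p 0)) u m = snd X u m" by simp
qed simp

lemma qprod_unit_left:
  assumes "wfp X" shows "qprod q (qpow q p 0) X = X"
proof (rule hpoly_eqI)
  fix u m
  let ?U = "(0::nat, \<lambda>(i::nat) (m::int). if i = 0 then 1 else (0::real))"
  have "snd (qprod q ?U X) u m = (\<Sum>i\<le>u. q ^ (i * fst X) * snd ?U i m * snd X (u - i) (m - int i))"
    using assms by (intro qprod_snd) simp_all
  also have "\<dots> = (\<Sum>i\<le>u. (if i = 0 then snd X u m else 0))"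
    by (rule sum.cong) auto
  finally show "snd (qprod q (qpow q p 0) X) u m = snd X u m" by simp
qed simp


definition co :: "hpoly \<Rightarrow> int \<Rightarrow> int \<Rightarrow> real" where
  "co p k m = (if k < 0 then 0 else snd p (nat k) m)"

lemma co_neg[simp]: "k < 0 \<Longrightarrow> co p k m = 0"
  by (simp add: co_def)

lemma co_nat[simp]: "co p (int k) m = snd p k m"
  by (simp add: co_def)

lemma co_big: "wfp p \<Longrightarrow> int (fst p) < k \<Longrightarrow> co p k m = 0"
  by (auto simp: co_def wfp_def)

lemma qprod_right_deg1:
  assumes Y: "wfp Y" and P: "wfp P" "fst P = 1"
  shows "co (qprod q Y P) j m =
     q powi j * co Y j m * snd P 0 (m - j) + q powi (j - 1) * co Y (j - 1) m * snd P 1 (m - (j - 1))"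
proof (cases "j < 0")
  case False
  then obtain J where J: "j = int J" by (metis nat_0_le not_less)
  show ?thesis
  proof (cases J)
    case 0
    then show ?thesis using Y P J by (simp add: qprod_snd co_def)
  next
    case (Suc K)
    have z: "(\<Sum>i<K. q ^ i * snd Y i m * snd P (Suc K - i) (m - int i)) = 0"
      using P by (intro sum.neutral) (auto simp: wfp_def)
    have "co (qprod q Y P) j m = snd (qprod q Y P) (Suc K) m"
      using J Suc by (simp only: co_nat)
    also have "\<dots> = (\<Sum>i\<le>Suc K. q ^ i * snd Y i m * snd P (Suc K - i) (m - int i))"
      using Y P by (simp add: qprod_snd)
    also have "\<dots> = (\<Sum>i<K. q ^ i * snd Y i m * snd P (Suc K - i) (m - int i))
        + q ^ K * snd Y K m * snd P 1 (m - int K) + q ^ Suc K * snd Y (Suc K) m * snd P 0 (m - int (Suc K))"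
      by (simp add: lessThan_Suc_atMost[symmetric] Suc_diff_le)
    also have "\<dots> = q powi j * co Y j m * snd P 0 (m - j) + q powi (j - 1) * co Y (j - 1) m * snd P 1 (m - (j - 1))"
    proof -
      have e: "co Y j m = snd Y (Suc K) m" "co Y (j - 1) m = snd Y K m"
        "q powi j = q ^ Suc K" "q powi (j - 1) = q ^ K" "m - (j - 1) = m - int K" "m - j = m - int (Suc K)"
        using J Suc by (simp_all add: co_def power_int_def nat_add_distrib)
      show ?thesis unfolding e by (simp only: z)
    qed
    finally show ?thesis .
  qed
qed simp

lemma RA:
  assumes Y: "wfp Y" and q: "q \<noteq> 0"
  shows "co (qprod q Y (hp_A q)) j m = q powi j * co Y j m + (q powi m - q powi (j - 1)) * co Y (j - 1) m"
proof -
  have "q powi (j - 1) * (q powi (m - (j - 1)) - 1) = q powi m - q powi (j - 1)"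
    using q by (simp add: right_diff_distrib power_int_add[symmetric])
  then show ?thesis
    using qprod_right_deg1[OF Y hpA_wf hpA_fst, where q=q and j=j and m=m]
    by (simp add: hp_A_def mult.commute mult.left_commute)
qed

lemma RB:
  assumes Y: "wfp Y"
  shows "co (qprod q Y hp_B) j m = q powi j * co Y j m - q powi (j - 1) * co Y (j - 1) m"
  using qprod_right_deg1[OF Y hpB_wf hpB_fst, where q=q and j=j and m=m]
  by (simp add: hp_B_def)


lemma powi_m1: "(q::real) \<noteq> 0 \<Longrightarrow> q powi (k - 1) = q powi k / q"
  by (simp add: power_int_diff)

lemma star:
  assumes X: "wfp X" and q: "q \<noteq> 0"
  shows "q powi k * co (qprod q X (qprod q hp_B (qpow q (hp_A q) t))) k m
     + (q powi m * q ^ Suc t - q powi (k - 1)) * co (qprod q X (qprod q hp_B (qpow q (hp_A q) t))) (k - 1) m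
   = q powi k * co (qprod q X (qpow q (hp_A q) (Suc t))) k m
     - q powi (k - 1) * co (qprod q X (qpow q (hp_A q) (Suc t))) (k - 1) m"
proof (induction t arbitrary: k)
  case 0
  have W: "qprod q X (qprod q hp_B (qpow q (hp_A q) 0)) = qprod q X hp_B"
    by (simp only: qprod_unit_right hpB_wf)
  have Y: "qpow q (hp_A q) (Suc 0) = hp_A q"
    by (simp only: qpow.simps(2) qprod_unit_left[OF hpA_wf])
  define J where "J = q powi k"
  define Q where "Q = q powi m"
  have p1: "q powi (k - 1) = J / q" and p2: "q powi (k - 1 - 1) = J / (q * q)"
    using q by (simp_all only: powi_m1[OF q]) (simp_all add: J_def)
  show ?case unfolding W Y RB[OF X] RA[OF X q] p1 p2 J_def[symmetric] Q_def[symmetric]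
    using q by (simp add: field_simps)
next
  case (Suc t)
  define W where "W = qprod q X (qprod q hp_B (qpow q (hp_A q) t))"
  define Y where "Y = qprod q X (qpow q (hp_A q) (Suc t))"
  have W': "qprod q X (qprod q hp_B (qpow q (hp_A q) (Suc t))) = qprod q W (hp_A q)"
    unfolding W_def by (simp only: qpow.simps qprod_assoc X hpB_wf qpow_wf hpA_wf qprod_wf)
  have Y': "qprod q X (qpow q (hp_A q) (Suc (Suc t))) = qprod q Y (hp_A q)"
    unfolding Y_def by (simp only: qpow.simps(2)[of q _ "Suc t"] qprod_assoc X qpow_wf hpA_wf)
  have wW: "wfp W" and wY: "wfp Y" by (simp_all add: W_def Y_def)
  define J where "J = q powi k"
  define Q where "Q = q powi m"
  have p1: "q powi (k - 1) = J / q" and p2: "q powi (k - 1 - 1) = J / (q * q)"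
    using q by (simp_all only: powi_m1[OF q]) (simp_all add: J_def)
  have IH0: "J * co W k m + (Q * q ^ Suc t - J / q) * co W (k - 1) m
     = J * co Y k m - J / q * co Y (k - 1) m"
    using Suc.IH[of k] unfolding W_def Y_def J_def Q_def p1 by simp
  have IH1: "J / q * co W (k - 1) m + (Q * q ^ Suc t - J / (q * q)) * co W (k - 1 - 1) m
     = J / q * co Y (k - 1) m - J / (q * q) * co Y (k - 1 - 1) m"
    using Suc.IH[of "k - 1"] unfolding W_def Y_def J_def Q_def p1 p2 by simp
  define w0 where "w0 = co W k m"
  define w1 where "w1 = co W (k - 1) m"
  define w2 where "w2 = co W (k - 1 - 1) m"
  define y0 where "y0 = co Y k m"
  define y1 where "y1 = co Y (k - 1) m"
  define y2 where "y2 = co Y (k - 1 - 1) m"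
  define S where "S = q ^ Suc t"
  have IH0': "J * w0 + (Q * S - J / q) * w1 = J * y0 - J / q * y1"
    using IH0 by (simp add: w0_def w1_def y0_def y1_def S_def)
  have IH1': "J / q * w1 + (Q * S - J / (q * q)) * w2 = J / q * y1 - J / (q * q) * y2"
    using IH1 by (simp add: w2_def w1_def y2_def y1_def S_def)
  have goal: "J * (J * w0 + (Q - J / q) * w1) + (Q * (q * S) - J / q) * (J / q * w1 + (Q - J / (q * q)) * w2)
     = J * (J * y0 + (Q - J / q) * y1) - J / q * (J / q * y1 + (Q - J / (q * q)) * y2)"
  proof -
    have "J * (J * w0 + (Q - J / q) * w1) + (Q * (q * S) - J / q) * (J / q * w1 + (Q - J / (q * q)) * w2)
      - (J * (J * y0 + (Q - J / q) * y1) - J / q * (J / q * y1 + (Q - J / (q * q)) * y2))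
      = J * ((J * w0 + (Q * S - J / q) * w1) - (J * y0 - J / q * y1))
        + (q * Q - J / q) * ((J / q * w1 + (Q * S - J / (q * q)) * w2) - (J / q * y1 - J / (q * q) * y2))"
      using q by (simp add: field_simps)
    also have "\<dots> = 0" using IH0' IH1' by simp
    finally show ?thesis by simp
  qed
  show ?case
    unfolding W' Y' RA[OF wW q] RA[OF wY q] p1 p2 J_def[symmetric] Q_def[symmetric]
    using goal by (simp add: w0_def w1_def w2_def y0_def y1_def y2_def S_def)
qed


definition Phi :: "real \<Rightarrow> int \<Rightarrow> nat \<Rightarrow> nat \<Rightarrow> int \<Rightarrow> real" where
  "Phi q m n r k = q powi (- m) * (co (qpow q (hp_A q) n) k m
     + (q powi m - 1) * co (qprod q (qpow q hp_B r) (qpow q (hp_A q) (n - r))) k m)"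

lemma Phi_0: "q \<noteq> 0 \<Longrightarrow> Phi q m n 0 k = co (qpow q (hp_A q) n) k m"
proof -
  assume q: "q \<noteq> 0"
  have "qprod q (qpow q hp_B 0) (qpow q (hp_A q) n) = qpow q (hp_A q) n"
    by (rule qprod_unit_left) simp
  moreover have "q powi (- m) * q powi m = 1" using q by (simp add: power_int_minus field_simps)
  ultimately show ?thesis unfolding Phi_def by (simp add: algebra_simps)
qed

lemma Phi_base: "q \<noteq> 0 \<Longrightarrow> Phi q m 0 0 k = (if k = 0 then 1 else 0)"
  by (simp add: Phi_0 co_def)

lemma Phi_big:
  assumes "r \<le> n" "int n < k" shows "Phi q m n r k = 0"
  using assms unfolding Phi_def
  by (simp add: co_big[of "qpow q (hp_A q) n"]
      co_big[of "qprod q (qpow q hp_B r) (qpow q (hp_A q) (n - r))"])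

lemma R1:
  assumes q: "q \<noteq> 0" and rn: "r \<le> n"
  shows "Phi q m (Suc n) r k = q powi k * Phi q m n r k + (q powi m - q powi (k - 1)) * Phi q m n r (k - 1)"
proof -
  have e: "Suc n - r = Suc (n - r)" using rn by simp
  have P: "qprod q (qpow q hp_B r) (qpow q (hp_A q) (Suc (n - r)))
      = qprod q (qprod q (qpow q hp_B r) (qpow q (hp_A q) (n - r))) (hp_A q)"
    by (simp only: qpow.simps(2) qprod_assoc qpow_wf hpA_wf)
  show ?thesis
    unfolding Phi_def e P qpow.simps(2)[of q "hp_A q" n] RA[OF qprod_wf q] RA[OF qpow_wf q]
    by (simp add: algebra_simps)
qed




lemma R2:
  fixes m k :: int and n r :: nat
  assumes q: "q \<noteq> 0" and rn: "r \<le> n"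
  defines "H \<equiv> \<lambda>j. q powi (j - int n) * (q ^ r * Phi q m n r j + (q ^ n - q ^ r) * Phi q m n (Suc r) j)"
  shows "Phi q m (Suc n) (Suc r) k = H k + Phi q m n 0 (k - 1) - H (k - 1)"
proof -
  define c where "c = q powi (- m)"
  define Q where "Q = q powi m"
  define J where "J = q powi k"
  define N where "N = (q ^ n :: real)"
  define R where "R = (q ^ r :: real)"
  have cQ: "c * Q = 1" using q by (simp add: c_def Q_def power_int_minus field_simps)
  have N0: "N \<noteq> 0" "R \<noteq> 0" using q by (simp_all add: N_def R_def)
  have Jn: "q powi (k - int n) = J / N" "q powi (k - 1 - int n) = J / (q * N)"
    using q by (simp_all add: J_def N_def power_int_diff)
  have p1: "q powi (k - 1) = J / q" using q by (simp add: J_def powi_m1)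
  define a where "a = (\<lambda>j. co (qpow q (hp_A q) n) j m)"
  have a': "co (qpow q (hp_A q) (Suc n)) k m = J * a k + (Q - J / q) * a (k - 1)"
    unfolding qpow.simps(2)[of q "hp_A q" n] RA[OF qpow_wf q] a_def J_def Q_def p1 by simp
  have Phi0: "Phi q m n 0 (k - 1) = a (k - 1)" using q by (simp add: Phi_0 a_def)
  show ?thesis
  proof (cases "r = n")
    case True
    define X where "X = qpow q hp_B n"
    have PP: "qprod q (qpow q hp_B (Suc n)) (qpow q (hp_A q) (Suc n - Suc n)) = qprod q X hp_B"
      unfolding X_def by (simp only: diff_self_eq_0 qprod_unit_right qpow_wf qprod_wf qpow.simps(2))
    have P: "qprod q (qpow q hp_B n) (qpow q (hp_A q) (n - n)) = X"
      unfolding X_def by (simp only: diff_self_eq_0 qprod_unit_right qpow_wf)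
    have E1: "Phi q m (Suc n) (Suc r) k = c * (J * a k + (Q - J / q) * a (k - 1)
        + (Q - 1) * (J * co X k m - J / q * co X (k - 1) m))"
      unfolding Phi_def True PP RB[OF qpow_wf[of q hp_B n, folded X_def]] a' p1
      by (simp add: c_def Q_def J_def)
    have E2: "H k = J / N * N * c * (a k + (Q - 1) * co X k m)"
      "H (k - 1) = J / (q * N) * N * c * (a (k - 1) + (Q - 1) * co X (k - 1) m)"
      unfolding H_def Phi_def True P Jn by (simp_all add: N_def c_def Q_def a_def)
    have E3: "H k = J * c * (a k + (Q - 1) * co X k m)"
      "H (k - 1) = J / q * c * (a (k - 1) + (Q - 1) * co X (k - 1) m)"
      using E2 N0 by simp_all
    define Jq where "Jq = J / q"
    have e: "Phi q m (Suc n) (Suc r) k - (H k + Phi q m n 0 (k - 1) - H (k - 1))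
        = (c * Q - 1) * a (k - 1)"
      unfolding Phi0 E1 E3 Jq_def[symmetric] by (simp add: algebra_simps)
    then show ?thesis using cQ by simp
  next
    case False
    define t where "t = n - r - 1"
    have nt: "n = r + Suc t" using rn False by (simp add: t_def)
    define X where "X = qpow q hp_B r"
    define W where "W = qprod q X (qprod q hp_B (qpow q (hp_A q) t))"
    define Y where "Y = qprod q X (qpow q (hp_A q) (Suc t))"
    have wW: "wfp W" by (simp add: W_def)
    have PPP: "qprod q (qpow q hp_B (Suc r)) (qpow q (hp_A q) (Suc n - Suc r)) = qprod q W (hp_A q)"
      unfolding W_def X_def nt
      by (simp only: qpow.simps(2) qprod_assoc qpow_wf hpA_wf hpB_wf qprod_wf Suc_diff_le diff_Suc_Suc add_diff_cancel_left' le_add1 add_Suc_right)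
    have PP: "qprod q (qpow q hp_B (Suc r)) (qpow q (hp_A q) (n - Suc r)) = W"
      unfolding W_def X_def nt
      by (simp only: qpow.simps(2) qprod_assoc qpow_wf hpA_wf hpB_wf add_Suc_right diff_Suc_Suc add_diff_cancel_left')
    have P: "qprod q (qpow q hp_B r) (qpow q (hp_A q) (n - r)) = Y"
      unfolding Y_def X_def nt by simp
    have st: "J * co W k m + (Q * q ^ Suc t - J / q) * co W (k - 1) m = J * co Y k m - J / q * co Y (k - 1) m"
      using star[where X=X and q=q and k=k and m=m and t=t] q unfolding W_def Y_def J_def Q_def p1 X_def by simp
    have S: "q ^ Suc t = N / R" using q by (simp add: N_def R_def nt power_add)
    have L: "Phi q m (Suc n) (Suc r) k = c * (J * a k + (Q - J / q) * a (k - 1)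
        + (Q - 1) * (J * co W k m + (Q - J / q) * co W (k - 1) m))"
      unfolding Phi_def PPP RA[OF wW q] a' p1
      by (simp add: c_def Q_def J_def)
    have H1: "H k = J / N * (R * c * (a k + (Q - 1) * co Y k m) + (N - R) * c * (a k + (Q - 1) * co W k m))"
      "H (k - 1) = J / (q * N) * (R * c * (a (k - 1) + (Q - 1) * co Y (k - 1) m)
         + (N - R) * c * (a (k - 1) + (Q - 1) * co W (k - 1) m))"
      unfolding H_def Phi_def P PP Jn by (simp_all add: N_def R_def c_def Q_def a_def)
    define w0 where "w0 = co W k m"
    define w1 where "w1 = co W (k - 1) m"
    define y0 where "y0 = co Y k m"
    define y1 where "y1 = co Y (k - 1) m"
    define \<rho> where "\<rho> = R / N"
    define SS where "SS = N / R"
    define Jq where "Jq = J / q"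
    have \<rho>S: "\<rho> * SS = 1" using N0 by (simp add: \<rho>_def SS_def)
    have st': "J * w0 + (Q * SS - Jq) * w1 = J * y0 - Jq * y1"
      using st unfolding S w0_def w1_def y0_def y1_def SS_def Jq_def .
    have H2: "H k = J * \<rho> * c * (a k + (Q - 1) * y0) + J * (1 - \<rho>) * c * (a k + (Q - 1) * w0)"
      "H (k - 1) = Jq * \<rho> * c * (a (k - 1) + (Q - 1) * y1) + Jq * (1 - \<rho>) * c * (a (k - 1) + (Q - 1) * w1)"
      unfolding H1 w0_def w1_def y0_def y1_def \<rho>_def Jq_def using N0 q
      by (simp_all add: field_simps)
    have L2: "Phi q m (Suc n) (Suc r) k = c * (J * a k + (Q - Jq) * a (k - 1)
        + (Q - 1) * (J * w0 + (Q - Jq) * w1))"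
      unfolding L w0_def w1_def Jq_def ..
    have "Phi q m (Suc n) (Suc r) k - (H k + Phi q m n 0 (k - 1) - H (k - 1))
      = (c * Q - 1) * a (k - 1) + c * (Q - 1) * (\<rho> * ((J * w0 + (Q * SS - Jq) * w1) - (J * y0 - Jq * y1))
         + Q * w1 * (1 - \<rho> * SS))"
      unfolding L2 H2 Phi0 by (simp add: algebra_simps)
    also have "\<dots> = 0" using st' cQ \<rho>S by simp
    finally show ?thesis by simp
  qed
qed




locale sf =
  fixes F :: "'a::{field,finite} set" and q :: nat
  assumes sub: "is_subfield F" and cardF: "card F = q"
begin

lemma F0: "0 \<in> F" and F1: "1 \<in> F"
  using sub by (auto simp: is_subfield_def)
lemma Fadd: "a \<in> F \<Longrightarrow> b \<in> F \<Longrightarrow> a + b \<in> F"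
  and Fmul: "a \<in> F \<Longrightarrow> b \<in> F \<Longrightarrow> a * b \<in> F"
  and Fneg: "a \<in> F \<Longrightarrow> - a \<in> F"
  using sub by (auto simp: is_subfield_def)
lemma Finv: "a \<in> F \<Longrightarrow> inverse a \<in> F"
  using sub by (cases "a = 0") (auto simp: is_subfield_def)
lemma Fsub: "a \<in> F \<Longrightarrow> b \<in> F \<Longrightarrow> a - b \<in> F"
  using Fadd Fneg by (metis diff_conv_add_uminus)
lemma Fdiv: "a \<in> F \<Longrightarrow> b \<in> F \<Longrightarrow> a / b \<in> F"
  using Fmul Finv by (simp add: divide_inverse)

lemma q2: "2 \<le> q"
proof -
  have "{0, 1} \<subseteq> F" using F0 F1 by auto
  then have "card {0::'a, 1} \<le> card F" by (rule card_mono[OF finite])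
  then show ?thesis using cardF by simp
qed

lemma q_pos: "0 < q" using q2 by simp

lemma Fsum: "finite A \<Longrightarrow> (\<And>i. i \<in> A \<Longrightarrow> g i \<in> F) \<Longrightarrow> sum g A \<in> F"
  by (induction A rule: finite_induct) (auto intro: Fadd F0)

lemma Fspan_alt: "Fspan F S = {\<Sum>t\<in>S. c t * t | c. \<forall>t\<in>S. c t \<in> F}"
proof (intro set_eqI iffI)
  fix y assume "y \<in> Fspan F S"
  then obtain T c where T: "finite T" "T \<subseteq> S" "\<forall>t\<in>T. c t \<in> F" "y = (\<Sum>t\<in>T. c t * t)"
    unfolding Fspan_def by blast
  define c' where "c' t = (if t \<in> T then c t else 0)" for t
  have "(\<Sum>t\<in>S. c' t * t) = (\<Sum>t\<in>T. c' t * t)"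
    by (rule sum.mono_neutral_right) (use T(2) in \<open>simp_all add: c'_def\<close>)
  also have "\<dots> = (\<Sum>t\<in>T. c t * t)"
    by (rule sum.cong) (simp_all add: c'_def)
  finally have "y = (\<Sum>t\<in>S. c' t * t)" using T(4) by simp
  moreover have "\<forall>t\<in>S. c' t \<in> F" using T(3) F0 by (simp add: c'_def)
  ultimately show "y \<in> {\<Sum>t\<in>S. c t * t | c. \<forall>t\<in>S. c t \<in> F}"
    by blast
next
  fix y assume "y \<in> {\<Sum>t\<in>S. c t * t | c. \<forall>t\<in>S. c t \<in> F}"
  then obtain c where "\<forall>t\<in>S. c t \<in> F" "y = (\<Sum>t\<in>S. c t * t)" by blast
  then show "y \<in> Fspan F S" unfolding Fspan_def using finite[of S] by blast
qed

lemma span_0: "0 \<in> Fspan F S"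
  unfolding Fspan_alt using F0 by (auto intro!: exI[of _ "\<lambda>_. 0"])

lemma span_add: "x \<in> Fspan F S \<Longrightarrow> y \<in> Fspan F S \<Longrightarrow> x + y \<in> Fspan F S"
proof -
  assume "x \<in> Fspan F S" "y \<in> Fspan F S"
  then obtain c1 c2 where "\<forall>t\<in>S. c1 t \<in> F" "x = (\<Sum>t\<in>S. c1 t * t)"
    "\<forall>t\<in>S. c2 t \<in> F" "y = (\<Sum>t\<in>S. c2 t * t)" unfolding Fspan_alt by blast
  then show ?thesis unfolding Fspan_alt
    by (auto intro!: exI[of _ "\<lambda>t. c1 t + c2 t"] Fadd simp: sum.distrib distrib_right)
qed

lemma span_smul: "a \<in> F \<Longrightarrow> x \<in> Fspan F S \<Longrightarrow> a * x \<in> Fspan F S"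
proof -
  assume a: "a \<in> F" and "x \<in> Fspan F S"
  then obtain c where "\<forall>t\<in>S. c t \<in> F" "x = (\<Sum>t\<in>S. c t * t)" unfolding Fspan_alt by blast
  then show ?thesis unfolding Fspan_alt using a
    by (auto intro!: exI[of _ "\<lambda>t. a * c t"] Fmul simp: sum_distrib_left mult.assoc)
qed

lemma span_neg: "x \<in> Fspan F S \<Longrightarrow> - x \<in> Fspan F S"
  using span_smul[of "-1" x S] F1 Fneg by fastforce

lemma span_diff: "x \<in> Fspan F S \<Longrightarrow> y \<in> Fspan F S \<Longrightarrow> x - y \<in> Fspan F S"
  using span_add span_neg by (metis diff_conv_add_uminus)

lemma span_sum: "finite A \<Longrightarrow> (\<And>i. i \<in> A \<Longrightarrow> g i \<in> Fspan F S) \<Longrightarrow> sum g A \<in> Fspan F S"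
  by (induction A rule: finite_induct) (auto intro: span_add span_0)

lemma span_sup: "t \<in> S \<Longrightarrow> t \<in> Fspan F S"
  unfolding Fspan_def using F1
  by (auto intro!: exI[of _ "{t}"] exI[of _ "\<lambda>_. 1"])

lemma span_minimal:
  assumes "S \<subseteq> W" "0 \<in> W" "\<And>x y. x \<in> W \<Longrightarrow> y \<in> W \<Longrightarrow> x + y \<in> W"
    "\<And>a x. a \<in> F \<Longrightarrow> x \<in> W \<Longrightarrow> a * x \<in> W"
  shows "Fspan F S \<subseteq> W"
proof
  fix y assume "y \<in> Fspan F S"
  then obtain c where c: "\<forall>t\<in>S. c t \<in> F" "y = (\<Sum>t\<in>S. c t * t)" unfolding Fspan_alt by blast
  have "\<And>A. finite A \<Longrightarrow> A \<subseteq> S \<Longrightarrow> (\<Sum>t\<in>A. c t * t) \<in> W"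
  proof -
    fix A :: "'a set" assume "finite A" "A \<subseteq> S"
    then show "(\<Sum>t\<in>A. c t * t) \<in> W"
      by (induction A rule: finite_induct) (use assms c in auto)
  qed
  then show "y \<in> W" using c by simp
qed

lemma span_subset: "S \<subseteq> Fspan F S' \<Longrightarrow> Fspan F S \<subseteq> Fspan F S'"
  by (rule span_minimal) (auto intro: span_0 span_add span_smul)

lemma span_insert: "Fspan F (insert z S) = {s + a * z | s a. s \<in> Fspan F S \<and> a \<in> F}"
  (is "_ = ?W")
proof
  show "Fspan F (insert z S) \<subseteq> ?W"
  proof (rule span_minimal)
    show "insert z S \<subseteq> ?W"
    proof
      fix x assume "x \<in> insert z S"
      then show "x \<in> ?W"
      proof
        assume "x = z"
        then have "x = 0 + 1 * z" by simp
        then show ?thesis using span_0 F1 by blast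
      next
        assume "x \<in> S"
        then have "x \<in> Fspan F S" "x = x + 0 * z" by (simp_all add: span_sup)
        then show ?thesis using F0 by blast
      qed
    qed
    have "(0::'a) = 0 + 0 * z" by simp
    then show "0 \<in> ?W" using F0 span_0 by blast
    show "x + y \<in> ?W" if hxy: "x \<in> ?W" "y \<in> ?W" for x y
    proof -
      obtain s a s' a' where "x = s + a * z" "y = s' + a' * z" "s \<in> Fspan F S" "s' \<in> Fspan F S" "a \<in> F" "a' \<in> F"
        using hxy by blast
      moreover have "x + y = (s + s') + (a + a') * z" using calculation by (simp add: algebra_simps)
      ultimately show ?thesis using span_add Fadd by blast
    qed
    show "b * x \<in> ?W" if hb: "b \<in> F" and hx: "x \<in> ?W" for b x
    proof -
      obtain s a where "x = s + a * z" "s \<in> Fspan F S" "a \<in> F"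
        using hx by blast
      moreover have "b * x = b * s + (b * a) * z" using calculation by (simp add: algebra_simps)
      ultimately show ?thesis using hb span_smul Fmul by blast
    qed
  qed
  show "?W \<subseteq> Fspan F (insert z S)"
  proof
    fix x assume "x \<in> ?W"
    then obtain s a where x: "x = s + a * z" "s \<in> Fspan F S" "a \<in> F" by blast
    have "Fspan F S \<subseteq> Fspan F (insert z S)"
      by (rule span_subset) (auto intro: span_sup)
    moreover have "z \<in> Fspan F (insert z S)" by (simp add: span_sup)
    ultimately show "x \<in> Fspan F (insert z S)"
      using x span_add span_smul by blast
  qed
qed

lemma span_insert_in: "z \<in> Fspan F S \<Longrightarrow> Fspan F (insert z S) = Fspan F S"
proof
  assume z: "z \<in> Fspan F S"
  show "Fspan F (insert z S) \<subseteq> Fspan F S"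
    using z by (rule span_subset[OF insert_subsetI]) (auto intro: span_sup)
  show "Fspan F S \<subseteq> Fspan F (insert z S)"
    by (rule span_subset) (auto intro: span_sup)
qed

lemma card_span_insert_notin:
  assumes z: "z \<notin> Fspan F S"
  shows "card (Fspan F (insert z S)) = q * card (Fspan F S)"
proof -
  have "Fspan F (insert z S) = (\<lambda>(s, a). s + a * z) ` (Fspan F S \<times> F)"
    unfolding span_insert by auto
  moreover have "inj_on (\<lambda>(s, a). s + a * z) (Fspan F S \<times> F)"
  proof (rule inj_onI, clarsimp)
    fix s a s' a' assume s: "s \<in> Fspan F S" "s' \<in> Fspan F S" and a: "a \<in> F" "a' \<in> F"
      and e: "s + a * z = s' + a' * z"
    show "s = s' \<and> a = a'"
    proof (cases "a = a'")
      case True then show ?thesis using e by simp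
    next
      case False
      then have "z = inverse (a - a') * (s' - s)"
        using e by (simp add: field_simps)
      moreover have "inverse (a - a') * (s' - s) \<in> Fspan F S"
        using s a by (intro span_smul Finv Fsub span_diff)
      ultimately show ?thesis using z by simp
    qed
  qed
  ultimately show ?thesis by (simp add: card_image card_cartesian_product cardF)
qed

lemma span_empty: "Fspan F {} = {0}"
  unfolding Fspan_alt by auto

lemma span_card_pow:
  "\<exists>d B. card (Fspan F S) = q ^ d \<and> B \<subseteq> S \<and> card B = d \<and> Fspan F B = Fspan F S"
proof -
  have "finite S" by simp
  then show ?thesis
  proof (induction S rule: finite_induct)
    case empty
    then show ?case by (auto simp: span_empty)
  next
    case (insert z S)
    then obtain d B where dB: "card (Fspan F S) = q ^ d" "B \<subseteq> S" "card B = d" "Fspan F B = Fspan F S"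
      by blast
    show ?case
    proof (cases "z \<in> Fspan F S")
      case True
      then show ?thesis using dB span_insert_in[OF True]
        by (intro exI[of _ d] exI[of _ B]) auto
    next
      case False
      have "z \<notin> B" using dB(2) insert(2) by blast
      have "Fspan F (insert z B) = Fspan F (insert z S)"
        unfolding span_insert dB(4) ..
      moreover have "card (insert z B) = Suc d" using \<open>z \<notin> B\<close> dB(3) by simp
      moreover have "card (Fspan F (insert z S)) = q ^ Suc d"
        using card_span_insert_notin[OF False] dB(1) by simp
      ultimately show ?thesis using dB(2) by (intro exI[of _ "Suc d"] exI[of _ "insert z B"]) auto
    qed
  qed
qed

lemma span_card_le: "card (Fspan F B) \<le> q ^ card B"
proof -
  have "finite B" by simp
  then show ?thesis
  proof (induction B rule: finite_induct)
    case empty then show ?case by (simp add: span_empty)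
  next
    case (insert z B)
    show ?case
    proof (cases "z \<in> Fspan F B")
      case True
      have "q ^ card B \<le> q ^ card (insert z B)"
        using insert(2) q_pos by (intro power_increasing) auto
      then show ?thesis using insert(3) span_insert_in[OF True] by simp
    next
      case False then show ?thesis using insert card_span_insert_notin[OF False] by simp
    qed
  qed
qed

lemma Fdim_card: "card (Fspan F S) = q ^ Fdim F S"
proof -
  obtain d B where dB: "card (Fspan F S) = q ^ d" "B \<subseteq> S" "card B = d" "Fspan F B = Fspan F S"
    using span_card_pow by blast
  have "Fdim F S = d"
    unfolding Fdim_def
  proof (rule Least_equality)
    show "\<exists>B. finite B \<and> card B = d \<and> B \<subseteq> Fspan F S \<and> Fspan F B = Fspan F S"
      using dB span_sup by (intro exI[of _ B]) auto
    fix k assume "\<exists>B. finite B \<and> card B = k \<and> B \<subseteq> Fspan F S \<and> Fspan F B = Fspan F S"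
    then obtain B' where "card B' = k" "Fspan F B' = Fspan F S" by blast
    then have "q ^ d \<le> q ^ k" using span_card_le[of B'] dB(1) by simp
    then show "d \<le> k" using q2 by (simp add: power_increasing_iff)
  qed
  then show ?thesis using dB by simp
qed


lemma Fdim_cong: "Fspan F S = Fspan F S' \<Longrightarrow> Fdim F S = Fdim F S'"
  unfolding Fdim_def by simp

definition Fvecs :: "nat \<Rightarrow> (nat \<Rightarrow> 'a) set" where
  "Fvecs n = {l \<in> vecs n. \<forall>i<n. l i \<in> F}"

end

definition dot :: "nat \<Rightarrow> (nat \<Rightarrow> 'a::field) \<Rightarrow> (nat \<Rightarrow> 'a) \<Rightarrow> 'a" where
  "dot n u c = (\<Sum>i<n. u i * c i)"

lemma dot_comm: "dot n u c = dot n c u"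
  unfolding dot_def by (simp add: mult.commute)

lemma dot_Suc_upd: "dot (Suc n) (u(n := z)) (c(n := d)) = dot n u c + z * d"
  unfolding dot_def by (simp add: lessThan_Suc)

lemma vecs_Suc_img: "vecs (Suc n) = (\<lambda>(u, z). u(n := z)) ` (vecs n \<times> UNIV)"
proof
  show "vecs (Suc n) \<subseteq> (\<lambda>(u, z). u(n := z)) ` (vecs n \<times> UNIV)"
  proof
    fix w assume w: "w \<in> vecs (Suc n)"
    have "w = (\<lambda>(u, z). u(n := z)) (w(n := 0), w n)" by simp
    moreover have "w(n := 0) \<in> vecs n" using w by (auto simp: vecs_def)
    ultimately show "w \<in> (\<lambda>(u, z). u(n := z)) ` (vecs n \<times> UNIV)" by blast
  qed
  show "(\<lambda>(u, z). u(n := z)) ` (vecs n \<times> UNIV) \<subseteq> vecs (Suc n)"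
    by (auto simp: vecs_def)
qed

lemma inj_upd: "inj_on (\<lambda>(u, z). u(n := z)) (vecs n \<times> UNIV)"
proof (rule inj_onI, clarify)
  fix u z u' z' assume u: "u \<in> vecs n" "u' \<in> vecs n" and e: "u(n := z) = u'(n := z')"
  have "z = z'" using fun_cong[OF e, of n] by simp
  moreover have "u = u'"
  proof
    fix i show "u i = u' i"
      using fun_cong[OF e, of i] u by (cases "i = n") (auto simp: vecs_def)
  qed
  ultimately show "u = u' \<and> z = z'" by simp
qed

lemma vecs_0: "vecs 0 = {\<lambda>_. 0}"
  by (auto simp: vecs_def)

lemma finite_vecs: "finite (vecs n :: (nat \<Rightarrow> 'a::{zero,finite}) set)"
  by (induction n) (simp_all add: vecs_0 vecs_Suc_img)

lemma sum_vecs_Suc: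
  fixes g :: "(nat \<Rightarrow> 'a::{zero,finite}) \<Rightarrow> 'b::comm_monoid_add"
  shows "(\<Sum>w\<in>vecs (Suc n). g w) = (\<Sum>u\<in>vecs n. \<Sum>z\<in>UNIV. g (u(n := z)))"
proof -
  have "(\<Sum>w\<in>vecs (Suc n). g w) = sum (g \<circ> (\<lambda>(u, z). u(n := z))) (vecs n \<times> UNIV)"
    by (simp only: vecs_Suc_img sum.reindex[OF inj_upd])
  also have "\<dots> = (\<Sum>(u, z)\<in>vecs n \<times> UNIV. g (u(n := z)))"
    by (rule sum.cong) auto
  also have "\<dots> = (\<Sum>u\<in>vecs n. \<Sum>z\<in>UNIV. g (u(n := z)))"
    by (rule sum.cartesian_product[symmetric])
  finally show ?thesis .
qed

lemma img_upd: "(u(n := z)) ` {..<Suc n} = insert z (u ` {..<n})"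
  by (auto simp: lessThan_Suc)

lemma card_filter: "finite A \<Longrightarrow> card {x \<in> A. P x} = (\<Sum>x\<in>A. if P x then 1 else 0)"
  by (subst card_eq_sum) (rule sum.inter_filter)

context sf
begin

lemma finite_Fvecs: "finite (Fvecs n)"
  by (rule finite_subset[OF _ finite_vecs]) (auto simp: Fvecs_def)

lemma Fvecs_Suc_img: "Fvecs (Suc n) = (\<lambda>(u, z). u(n := z)) ` (Fvecs n \<times> F)"
proof
  show "Fvecs (Suc n) \<subseteq> (\<lambda>(u, z). u(n := z)) ` (Fvecs n \<times> F)"
  proof
    fix w assume w: "w \<in> Fvecs (Suc n)"
    have "w = (\<lambda>(u, z). u(n := z)) (w(n := 0), w n)" by simp
    moreover have "w(n := 0) \<in> Fvecs n" "w n \<in> F" using w by (auto simp: vecs_def Fvecs_def)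
    ultimately show "w \<in> (\<lambda>(u, z). u(n := z)) ` (Fvecs n \<times> F)" by blast
  qed
  show "(\<lambda>(u, z). u(n := z)) ` (Fvecs n \<times> F) \<subseteq> Fvecs (Suc n)"
    by (auto simp: vecs_def Fvecs_def less_Suc_eq)
qed

lemma card_Fvecs: "card (Fvecs n) = q ^ n"
proof (induction n)
  case 0
  have "Fvecs 0 = {\<lambda>_. 0}" by (auto simp: Fvecs_def vecs_def)
  then show ?case by simp
next
  case (Suc n)
  have "inj_on (\<lambda>(u, z). u(n := z)) (Fvecs n \<times> F)"
    by (rule inj_on_subset[OF inj_upd]) (auto simp: Fvecs_def)
  then show ?case unfolding Fvecs_Suc_img
    by (simp add: card_image card_cartesian_product cardF Suc.IH)
qed

lemma rk_card: "card (Fspan F (u ` {..<n})) = q ^ rk F n u"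
  unfolding rk_def by (rule Fdim_card)

lemma pow_inj: "q ^ a = q ^ b \<Longrightarrow> a = b"
  using q2 by (simp add: power_inject_exp)

lemma pow_le: "q ^ a \<le> q ^ b \<Longrightarrow> a \<le> b"
  using q2 by (simp add: power_increasing_iff)

lemma rk_Suc: "rk F (Suc n) (u(n := z)) = (if z \<in> Fspan F (u ` {..<n}) then rk F n u else Suc (rk F n u))"
proof (cases "z \<in> Fspan F (u ` {..<n})")
  case True
  then show ?thesis unfolding rk_def img_upd using Fdim_cong[OF span_insert_in[OF True]] by simp
next
  case False
  have "q ^ rk F (Suc n) (u(n := z)) = q ^ Suc (rk F n u)"
    using rk_card[of "u(n := z)" "Suc n"] card_span_insert_notin[OF False] rk_card[of u n]
    unfolding img_upd by simp
  then show ?thesis using False pow_inj by simp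
qed

lemma dot_in_V: "l \<in> Fvecs n \<Longrightarrow> dot n l u \<in> Fspan F (u ` {..<n})"
  unfolding dot_def Fvecs_def
  by (intro span_sum span_smul span_sup) auto

lemma dot_F: "l \<in> Fvecs n \<Longrightarrow> l' \<in> Fvecs n \<Longrightarrow> dot n l l' \<in> F"
  unfolding dot_def Fvecs_def by (intro Fsum Fmul) auto

lemma V_dots: "Fspan F (u ` {..<n}) = (\<lambda>l. dot n l u) ` Fvecs n"
proof
  show "(\<lambda>l. dot n l u) ` Fvecs n \<subseteq> Fspan F (u ` {..<n})"
    using dot_in_V by blast
  show "Fspan F (u ` {..<n}) \<subseteq> (\<lambda>l. dot n l u) ` Fvecs n"
  proof (rule span_minimal)
    show "u ` {..<n} \<subseteq> (\<lambda>l. dot n l u) ` Fvecs n"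
    proof
      fix x assume "x \<in> u ` {..<n}"
      then obtain i where i: "i < n" "x = u i" by blast
      define l where "l = (\<lambda>j. if j = i then (1::'a) else 0)"
      have "l \<in> Fvecs n" using i F0 F1 by (auto simp: l_def Fvecs_def vecs_def)
      moreover have "dot n l u = (\<Sum>j<n. if j = i then u j else 0)"
        unfolding dot_def l_def by (rule sum.cong) auto
      then have "dot n l u = x" using i by simp
      ultimately show "x \<in> (\<lambda>l. dot n l u) ` Fvecs n" by blast
    qed
    have z1: "(\<lambda>_. 0) \<in> Fvecs n" using F0 by (auto simp: Fvecs_def vecs_def)
    have z2: "0 = dot n (\<lambda>_. 0) u" by (simp add: dot_def)
    show "0 \<in> (\<lambda>l. dot n l u) ` Fvecs n" using z1 z2 by blast
    show "x + y \<in> (\<lambda>l. dot n l u) ` Fvecs n"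
      if hx: "x \<in> (\<lambda>l. dot n l u) ` Fvecs n" and hy: "y \<in> (\<lambda>l. dot n l u) ` Fvecs n" for x y
    proof -
      obtain l l' where l: "l \<in> Fvecs n" "x = dot n l u" "l' \<in> Fvecs n" "y = dot n l' u"
        using hx hy by blast
      have a1: "(\<lambda>i. l i + l' i) \<in> Fvecs n"
        using l(1,3) unfolding Fvecs_def vecs_def by (simp add: Fadd)
      have a2: "x + y = dot n (\<lambda>i. l i + l' i) u" using l
        by (simp add: dot_def sum.distrib distrib_right)
      show ?thesis using a1 a2 by blast
    qed
    show "a * x \<in> (\<lambda>l. dot n l u) ` Fvecs n"
      if ha: "a \<in> F" and hx: "x \<in> (\<lambda>l. dot n l u) ` Fvecs n" for a x
    proof -
      obtain l where l: "l \<in> Fvecs n" "x = dot n l u" using hx by blast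
      have a1: "(\<lambda>i. a * l i) \<in> Fvecs n" using l(1) ha unfolding Fvecs_def vecs_def by (simp add: Fmul)
      have a2: "a * x = dot n (\<lambda>i. a * l i) u" using l
        by (simp add: dot_def sum_distrib_left mult.assoc)
      show ?thesis using a1 a2 by blast
    qed
  qed
qed

lemma rk_le: "rk F n u \<le> n"
proof -
  have "card (Fspan F (u ` {..<n})) \<le> card (Fvecs n)"
    unfolding V_dots by (rule card_image_le[OF finite_Fvecs])
  then have "q ^ rk F n u \<le> q ^ n" by (simp add: rk_card card_Fvecs)
  then show ?thesis by (rule pow_le)
qed

lemma dot_diff: "dot n (\<lambda>i. l i - l' i) u = dot n l u - dot n l' u"
  by (simp add: dot_def sum_subtractf left_diff_distrib)

lemma dot_add: "dot n (\<lambda>i. l i + l' i) u = dot n l u + dot n l' u"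
  by (simp add: dot_def sum.distrib distrib_right)

lemma Fvecs_diff: "l \<in> Fvecs n \<Longrightarrow> l' \<in> Fvecs n \<Longrightarrow> (\<lambda>i. l i - l' i) \<in> Fvecs n"
  unfolding Fvecs_def vecs_def by (simp add: Fsub)

lemma Fvecs_add: "l \<in> Fvecs n \<Longrightarrow> l' \<in> Fvecs n \<Longrightarrow> (\<lambda>i. l i + l' i) \<in> Fvecs n"
  unfolding Fvecs_def vecs_def by (simp add: Fadd)

lemma fiber:
  assumes w: "w \<in> Fspan F (u ` {..<n})"
  shows "card {l \<in> Fvecs n. dot n l u = w} * q ^ rk F n u = q ^ n"
proof -
  define K where "K = {l \<in> Fvecs n. dot n l u = 0}"
  have fib: "card {l \<in> Fvecs n. dot n l u = w'} = card K" if w': "w' \<in> Fspan F (u ` {..<n})" for w'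
  proof -
    obtain l0 where l0: "l0 \<in> Fvecs n" "dot n l0 u = w'" using w' unfolding V_dots by blast
    have "{l \<in> Fvecs n. dot n l u = w'} = (\<lambda>m i. l0 i + m i) ` K"
    proof
      show "{l \<in> Fvecs n. dot n l u = w'} \<subseteq> (\<lambda>m i. l0 i + m i) ` K"
      proof
        fix l assume l: "l \<in> {l \<in> Fvecs n. dot n l u = w'}"
        have "(\<lambda>i. l i - l0 i) \<in> K" using l l0
          unfolding K_def by (simp add: Fvecs_diff dot_diff)
        then show "l \<in> (\<lambda>m i. l0 i + m i) ` K"
          unfolding image_iff by (intro bexI[where x="\<lambda>i. l i - l0 i"]) simp_all
      qed
      show "(\<lambda>m i. l0 i + m i) ` K \<subseteq> {l \<in> Fvecs n. dot n l u = w'}"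
      proof
        fix x assume "x \<in> (\<lambda>m i. l0 i + m i) ` K"
        then obtain m where m: "m \<in> K" "x = (\<lambda>i. l0 i + m i)" by blast
        then show "x \<in> {l \<in> Fvecs n. dot n l u = w'}"
          using l0 unfolding K_def by (simp add: Fvecs_add dot_add)
      qed
    qed
    moreover have "inj_on (\<lambda>m i. l0 i + m i) K"
    proof (rule inj_onI)
      fix a b assume e: "(\<lambda>i. l0 i + a i) = (\<lambda>i. l0 i + b i)"
      show "a = b"
      proof
        fix i show "a i = b i" using fun_cong[OF e, of i] by simp
      qed
    qed
    ultimately show ?thesis by (simp add: card_image)
  qed
  have U: "Fvecs n = (\<Union>w'\<in>Fspan F (u ` {..<n}). {l \<in> Fvecs n. dot n l u = w'})"
  proof (rule set_eqI)
    fix l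
    show "l \<in> Fvecs n \<longleftrightarrow> l \<in> (\<Union>w'\<in>Fspan F (u ` {..<n}). {l \<in> Fvecs n. dot n l u = w'})"
    proof
      assume "l \<in> Fvecs n"
      then have "dot n l u \<in> Fspan F (u ` {..<n})" "l \<in> {l' \<in> Fvecs n. dot n l' u = dot n l u}"
        by (simp_all add: dot_in_V)
      then show "l \<in> (\<Union>w'\<in>Fspan F (u ` {..<n}). {l \<in> Fvecs n. dot n l u = w'})" by (rule UN_I)
    qed auto
  qed
  have "card (\<Union>w'\<in>Fspan F (u ` {..<n}). {l \<in> Fvecs n. dot n l u = w'})
      = (\<Sum>w'\<in>Fspan F (u ` {..<n}). card {l \<in> Fvecs n. dot n l u = w'})"
  proof (rule card_UN_disjoint)
    show "finite (Fspan F (u ` {..<n}))" by simp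
    show "\<forall>i\<in>Fspan F (u ` {..<n}). finite {l \<in> Fvecs n. dot n l u = i}"
      using finite_Fvecs by simp
    show "\<forall>i\<in>Fspan F (u ` {..<n}). \<forall>j\<in>Fspan F (u ` {..<n}). i \<noteq> j \<longrightarrow>
        {l \<in> Fvecs n. dot n l u = i} \<inter> {l \<in> Fvecs n. dot n l u = j} = {}"
      by auto
  qed
  then have "card (Fvecs n) = (\<Sum>w'\<in>Fspan F (u ` {..<n}). card {l \<in> Fvecs n. dot n l u = w'})"
    using U by simp
  also have "\<dots> = card (Fspan F (u ` {..<n})) * card K"
    using fib by simp
  finally show ?thesis using fib[OF w] rk_card[of u n] card_Fvecs[of n] by (simp add: mult.commute)
qed

end

lemma dot_Suc: "dot (Suc n) x y = dot n x y + x n * y n"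
  by (simp add: dot_def)

lemma dot_upd_out: "dot n x (y(n := a)) = dot n x y"
  unfolding dot_def by (rule sum.cong) auto

lemma dot_upd_out1: "dot n (x(n := a)) y = dot n x y"
  unfolding dot_def by (rule sum.cong) auto

lemma sum_if_mem:
  fixes S :: "'a::finite set" and a b :: real
  shows "(\<Sum>z\<in>UNIV. if z \<in> S then a else b) = real (card S) * a + (real (card (UNIV::'a set)) - real (card S)) * b"
proof -
  have "(\<Sum>z\<in>UNIV. if z \<in> S then a else b) = (\<Sum>z\<in>S. a) + (\<Sum>z\<in>-S. b)"
    using sum.If_cases[OF finite[of "UNIV :: 'a set"], of "\<lambda>z. z \<in> S" "\<lambda>_. a" "\<lambda>_. b"] by simp
  then have "(\<Sum>z\<in>UNIV. if z \<in> S then a else b) = real (card S) * a + real (card (UNIV - S)) * b"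
    by (simp add: Compl_eq_Diff_UNIV)
  moreover have "real (card (UNIV - S)) = real (card (UNIV::'a set)) - real (card S)"
    using card_Diff_subset[OF finite subset_UNIV, of S] card_mono[OF finite subset_UNIV, of S]
    by (simp add: of_nat_diff)
  ultimately show ?thesis by simp
qed

lemma Nr_alg:
  fixes Q A B N :: real
  assumes "Q \<noteq> 0" "B \<noteq> 0"
  shows "(N - B) * ((Q - 1) * A / (Q * B)) = N * (A / B) + (A - N) * (A / (Q * B)) - (A + (A / B - 1) * (A / Q))"
  using assms by (simp add: field_simps)

lemma Phi_neg: "k < 0 \<Longrightarrow> Phi q m n r k = 0"
  by (simp add: Phi_def)

lemma sum_if_c: "(\<Sum>u\<in>A. if P u then (c::real) else 0) = c * (\<Sum>u\<in>A. if P u then 1 else 0)"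
  by (simp add: sum_distrib_left if_distrib cong: if_cong)

locale sfm = sf F q for F :: "'a::{field,finite} set" and q :: nat +
  fixes m :: nat
  assumes cardU: "card (UNIV :: 'a set) = q ^ m"
begin

definition cnt :: "nat \<Rightarrow> (nat \<Rightarrow> 'a) \<Rightarrow> nat \<Rightarrow> nat" where
  "cnt n c k = card {u \<in> vecs n. dot n u c = 0 \<and> rk F n u = k}"

lemma cnt_sum: "real (cnt n c k) = (\<Sum>u\<in>vecs n. if dot n u c = 0 \<and> rk F n u = k then 1 else 0)"
  unfolding cnt_def card_filter[OF finite_vecs] of_nat_sum by (intro sum.cong) auto

lemma C1:
  assumes c: "c \<in> vecs n"
  shows "real (cnt (Suc n) (c(n := 0)) k) = real q ^ k * real (cnt n c k)
     + (if k = 0 then 0 else (real q ^ m - real q ^ (k - 1)) * real (cnt n c (k - 1)))"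
proof -
  have inner: "(\<Sum>z\<in>UNIV. if dot n u c = 0 \<and> rk F (Suc n) (u(n := z)) = k then 1 else 0 :: real)
      = (if dot n u c = 0 \<and> rk F n u = k then real q ^ k else 0)
        + (if dot n u c = 0 \<and> Suc (rk F n u) = k then real q ^ m - real q ^ (k - 1) else 0)" for u
  proof -
    have "(\<Sum>z\<in>UNIV. if dot n u c = 0 \<and> rk F (Suc n) (u(n := z)) = k then 1 else 0 :: real)
       = (\<Sum>z\<in>UNIV. if z \<in> Fspan F (u ` {..<n}) then (if dot n u c = 0 \<and> rk F n u = k then 1 else 0)
            else (if dot n u c = 0 \<and> Suc (rk F n u) = k then 1 else 0))"
      by (rule sum.cong) (simp_all add: rk_Suc)
    also have "\<dots> = (if dot n u c = 0 \<and> rk F n u = k then real q ^ k else 0)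
        + (if dot n u c = 0 \<and> Suc (rk F n u) = k then real q ^ m - real q ^ (k - 1) else 0)"
      unfolding sum_if_mem rk_card cardU by auto
    finally show ?thesis .
  qed
  have "real (cnt (Suc n) (c(n := 0)) k)
     = (\<Sum>u\<in>vecs n. \<Sum>z\<in>UNIV. if dot n u c = 0 \<and> rk F (Suc n) (u(n := z)) = k then 1 else 0)"
    unfolding cnt_sum sum_vecs_Suc dot_Suc_upd by simp
  also have "\<dots> = (\<Sum>u\<in>vecs n. (if dot n u c = 0 \<and> rk F n u = k then real q ^ k else 0)
        + (if dot n u c = 0 \<and> Suc (rk F n u) = k then real q ^ m - real q ^ (k - 1) else 0))"
    by (simp only: inner)
  also have "\<dots> = real q ^ k * real (cnt n c k)
     + (if k = 0 then 0 else (real q ^ m - real q ^ (k - 1)) * real (cnt n c (k - 1)))"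
  proof (cases k)
    case 0
    then show ?thesis by (simp add: cnt_sum sum_distrib_left cong: if_cong)
  next
    case (Suc k')
    have e: "\<And>u. (Suc (rk F n u) = k) = (rk F n u = k - 1)" using Suc by auto
    have s1: "(\<Sum>u\<in>vecs n. if dot n u c = 0 \<and> rk F n u = k then real q ^ k else 0)
        = real q ^ k * real (cnt n c k)"
      unfolding cnt_sum by (rule sum_if_c)
    have s2: "(\<Sum>u\<in>vecs n. if dot n u c = 0 \<and> Suc (rk F n u) = k then real q ^ m - real q ^ (k - 1) else 0)
        = (real q ^ m - real q ^ (k - 1)) * real (cnt n c (k - 1))"
      unfolding cnt_sum e by (rule sum_if_c)
    show ?thesis unfolding sum.distrib s1 s2 using Suc by simp
  qed
  finally show ?thesis .
qed


definition shear :: "nat \<Rightarrow> (nat \<Rightarrow> 'a) \<Rightarrow> 'a \<Rightarrow> (nat \<Rightarrow> 'a) \<Rightarrow> (nat \<Rightarrow> 'a)" where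
  "shear n \<mu> s w = (\<lambda>i. if i < n then w i + s * (w n * \<mu> i) else w i)"

lemma shear_span:
  assumes mu: "\<mu> \<in> Fvecs n" and s: "s \<in> F"
  shows "Fspan F (shear n \<mu> s w ` {..<Suc n}) \<subseteq> Fspan F (w ` {..<Suc n})"
proof (rule span_subset, rule subsetI)
  fix x assume "x \<in> shear n \<mu> s w ` {..<Suc n}"
  then obtain i where i: "i < Suc n" "x = shear n \<mu> s w i" by blast
  have wn: "w n \<in> Fspan F (w ` {..<Suc n})" by (rule span_sup) auto
  have wi: "w i \<in> Fspan F (w ` {..<Suc n})" using i by (intro span_sup) auto
  show "x \<in> Fspan F (w ` {..<Suc n})"
  proof (cases "i < n")
    case True
    have "s * \<mu> i \<in> F" using mu s True by (simp add: Fvecs_def Fmul)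
    then have "(s * \<mu> i) * w n \<in> Fspan F (w ` {..<Suc n})" using wn by (rule span_smul)
    then show ?thesis using i True wi by (simp add: shear_def span_add mult.commute mult.left_commute)
  next
    case False
    then show ?thesis using i wi by (simp add: shear_def)
  qed
qed

lemma shear_inv: "shear n \<mu> (- 1) (shear n \<mu> 1 w) = w"
  by (rule ext) (simp add: shear_def)

lemma shear_inv2: "shear n \<mu> 1 (shear n \<mu> (- 1) w) = w"
  by (rule ext) (simp add: shear_def)

lemma rk_shear:
  assumes mu: "\<mu> \<in> Fvecs n"
  shows "rk F (Suc n) (shear n \<mu> 1 w) = rk F (Suc n) w"
proof -
  have "Fspan F (shear n \<mu> 1 w ` {..<Suc n}) = Fspan F (w ` {..<Suc n})"
  proof
    show "Fspan F (shear n \<mu> 1 w ` {..<Suc n}) \<subseteq> Fspan F (w ` {..<Suc n})"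
      using mu F1 by (rule shear_span)
    show "Fspan F (w ` {..<Suc n}) \<subseteq> Fspan F (shear n \<mu> 1 w ` {..<Suc n})"
      using shear_span[OF mu, of "- 1" "shear n \<mu> 1 w"] F1 Fneg unfolding shear_inv by blast
  qed
  then show ?thesis unfolding rk_def by (rule Fdim_cong)
qed

lemma shear_vecs: "w \<in> vecs (Suc n) \<Longrightarrow> shear n \<mu> s w \<in> vecs (Suc n)"
  by (simp add: shear_def vecs_def)

lemma dot_shear:
  "dot (Suc n) (shear n \<mu> 1 w) (c(n := 0)) = dot n w c + w n * dot n \<mu> c"
proof -
  have "dot n (shear n \<mu> 1 w) c = dot n w c + w n * dot n \<mu> c"
    unfolding dot_def shear_def by (simp add: sum.distrib distrib_right sum_distrib_left mult.assoc)
  then show ?thesis by (simp add: dot_Suc dot_upd_out)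
qed

lemma C2:
  assumes c: "c \<in> vecs n" and d: "d \<in> Fspan F (c ` {..<n})"
  shows "cnt (Suc n) (c(n := d)) k = cnt (Suc n) (c(n := 0)) k"
proof -
  obtain \<mu> where mu: "\<mu> \<in> Fvecs n" "d = dot n \<mu> c" using d unfolding V_dots by blast
  define A where "A = {u \<in> vecs (Suc n). dot (Suc n) u (c(n := d)) = 0 \<and> rk F (Suc n) u = k}"
  define B where "B = {u \<in> vecs (Suc n). dot (Suc n) u (c(n := 0)) = 0 \<and> rk F (Suc n) u = k}"
  have key: "dot (Suc n) (shear n \<mu> 1 w) (c(n := 0)) = dot (Suc n) w (c(n := d))" for w
    unfolding dot_shear mu(2) by (simp add: dot_Suc dot_upd_out)
  have "bij_betw (shear n \<mu> 1) A B"
  proof (rule bij_betw_byWitness[where f' = "shear n \<mu> (- 1)"])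
    show "\<forall>a\<in>A. shear n \<mu> (- 1) (shear n \<mu> 1 a) = a" by (simp add: shear_inv)
    show "\<forall>a\<in>B. shear n \<mu> 1 (shear n \<mu> (- 1) a) = a" by (simp add: shear_inv2)
    show "shear n \<mu> 1 ` A \<subseteq> B"
      unfolding A_def B_def using key rk_shear[OF mu(1)] shear_vecs by auto
    show "shear n \<mu> (- 1) ` B \<subseteq> A"
    proof
      fix x assume "x \<in> shear n \<mu> (- 1) ` B"
      then obtain b where b: "b \<in> B" "x = shear n \<mu> (- 1) b" by blast
      have "b = shear n \<mu> 1 x" using b(2) shear_inv2 by simp
      then show "x \<in> A" using b(1) key[of x] rk_shear[OF mu(1), of x] shear_vecs[of b n \<mu> "- 1"] b(2)
        unfolding A_def B_def by auto
    qed
  qed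
  then have "card A = card B" by (rule bij_betw_same_card)
  then show ?thesis unfolding cnt_def A_def B_def .
qed


definition hcnt :: "nat \<Rightarrow> (nat \<Rightarrow> 'a) \<Rightarrow> 'a \<Rightarrow> nat \<Rightarrow> nat" where
  "hcnt n c d j = card {u \<in> vecs n. - (dot n u c / d) \<in> Fspan F (u ` {..<n}) \<and> rk F n u = j}"

lemma hcnt_sum: "real (hcnt n c d j) =
   (\<Sum>u\<in>vecs n. if - (dot n u c / d) \<in> Fspan F (u ` {..<n}) \<and> rk F n u = j then 1 else 0)"
  unfolding hcnt_def card_filter[OF finite_vecs] of_nat_sum by (intro sum.cong) auto

lemma cnt0_sum: "real (cnt n (\<lambda>_. 0) j) = (\<Sum>u\<in>vecs n. if rk F n u = j then 1 else 0)"
  unfolding cnt_sum by (simp add: dot_def)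

lemma C3a:
  assumes c: "c \<in> vecs n" and d: "d \<notin> Fspan F (c ` {..<n})"
  shows "real (cnt (Suc n) (c(n := d)) k) = real (hcnt n c d k)
    + (if k = 0 then 0 else real (cnt n (\<lambda>_. 0) (k - 1)) - real (hcnt n c d (k - 1)))"
proof -
  have d0: "d \<noteq> 0" using d span_0 by blast
  define zu where "zu u = - (dot n u c / d)" for u
  have eq: "(dot n u c + z * d = 0) = (z = zu u)" for u z
  proof
    assume "dot n u c + z * d = 0"
    then have "z * d = - dot n u c" by (simp add: eq_neg_iff_add_eq_0 add.commute)
    then show "z = zu u" using d0 by (simp add: zu_def field_simps)
  next
    assume "z = zu u"
    then show "dot n u c + z * d = 0" using d0 by (simp add: zu_def field_simps)
  qed
  have inner: "(\<Sum>z\<in>UNIV. if dot n u c + z * d = 0 \<and> rk F (Suc n) (u(n := z)) = k then 1 else 0 :: real)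
     = (if zu u \<in> Fspan F (u ` {..<n}) \<and> rk F n u = k then 1 else 0)
       + (if zu u \<notin> Fspan F (u ` {..<n}) \<and> Suc (rk F n u) = k then 1 else 0)" for u
  proof -
    have "(\<Sum>z\<in>UNIV. if dot n u c + z * d = 0 \<and> rk F (Suc n) (u(n := z)) = k then 1 else 0 :: real)
       = (\<Sum>z\<in>UNIV. if z = zu u then (if rk F (Suc n) (u(n := zu u)) = k then 1 else 0) else 0)"
      by (rule sum.cong) (auto simp: eq)
    also have "\<dots> = (if rk F (Suc n) (u(n := zu u)) = k then 1 else 0)"
      by (simp add: sum.delta)
    also have "\<dots> = (if zu u \<in> Fspan F (u ` {..<n}) \<and> rk F n u = k then 1 else 0)
       + (if zu u \<notin> Fspan F (u ` {..<n}) \<and> Suc (rk F n u) = k then 1 else 0)"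
      by (simp add: rk_Suc)
    finally show ?thesis .
  qed
  have "real (cnt (Suc n) (c(n := d)) k) =
     (\<Sum>u\<in>vecs n. \<Sum>z\<in>UNIV. if dot n u c + z * d = 0 \<and> rk F (Suc n) (u(n := z)) = k then 1 else 0)"
    unfolding cnt_sum sum_vecs_Suc dot_Suc_upd by simp
  also have "\<dots> = (\<Sum>u\<in>vecs n. (if zu u \<in> Fspan F (u ` {..<n}) \<and> rk F n u = k then 1 else 0)
       + (if zu u \<notin> Fspan F (u ` {..<n}) \<and> Suc (rk F n u) = k then 1 else 0))"
    by (simp only: inner)
  also have "\<dots> = real (hcnt n c d k)
      + (\<Sum>u\<in>vecs n. if zu u \<notin> Fspan F (u ` {..<n}) \<and> Suc (rk F n u) = k then 1 else 0)"
    unfolding sum.distrib hcnt_sum zu_def by simp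
  also have "(\<Sum>u\<in>vecs n. if zu u \<notin> Fspan F (u ` {..<n}) \<and> Suc (rk F n u) = k then 1 else 0 :: real)
     = (if k = 0 then 0 else real (cnt n (\<lambda>_. 0) (k - 1)) - real (hcnt n c d (k - 1)))"
  proof (cases k)
    case 0 then show ?thesis by simp
  next
    case (Suc k')
    have "(\<Sum>u\<in>vecs n. if zu u \<notin> Fspan F (u ` {..<n}) \<and> Suc (rk F n u) = k then 1 else 0 :: real)
       = (\<Sum>u\<in>vecs n. (if rk F n u = k' then 1 else 0)
            - (if zu u \<in> Fspan F (u ` {..<n}) \<and> rk F n u = k' then 1 else 0))"
      by (rule sum.cong) (auto simp: Suc)
    also have "\<dots> = real (cnt n (\<lambda>_. 0) k') - real (hcnt n c d k')"
      unfolding sum_subtractf cnt0_sum hcnt_sum zu_def ..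
    finally show ?thesis using Suc by simp
  qed
  finally show ?thesis .
qed


lemma dot_cdl: "dot n u (\<lambda>i. c i + d * l i) = dot n u c + d * dot n l u"
  unfolding dot_def by (simp add: sum.distrib distrib_left sum_distrib_left mult.commute mult.left_commute)

lemma C3b:
  assumes d0: "d \<noteq> 0"
  shows "real (hcnt n c d j) * real q ^ n = real q ^ j * (\<Sum>l\<in>Fvecs n. real (cnt n (\<lambda>i. c i + d * l i) j))"
proof -
  define zu where "zu u = - (dot n u c / d)" for u
  have eq: "(dot n u c + d * x = 0) = (x = zu u)" for u x
  proof
    assume "dot n u c + d * x = 0"
    then have "d * x = - dot n u c" by (simp add: eq_neg_iff_add_eq_0 add.commute)
    then show "x = zu u" using d0 by (simp add: zu_def field_simps)
  next
    assume "x = zu u"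
    then show "dot n u c + d * x = 0" using d0 by (simp add: zu_def field_simps)
  qed
  have per_u: "(\<Sum>l\<in>Fvecs n. if dot n u (\<lambda>i. c i + d * l i) = 0 \<and> rk F n u = j then 1 else 0) * real q ^ j
      = (if zu u \<in> Fspan F (u ` {..<n}) \<and> rk F n u = j then real q ^ n else 0)" for u
  proof -
    have "(\<Sum>l\<in>Fvecs n. if dot n u (\<lambda>i. c i + d * l i) = 0 \<and> rk F n u = j then 1 else 0 :: real)
       = (if rk F n u = j then (\<Sum>l\<in>Fvecs n. if dot n l u = zu u then 1 else 0) else 0)"
      by (auto simp: dot_cdl eq intro!: sum.cong)
    also have "(\<Sum>l\<in>Fvecs n. if dot n l u = zu u then 1 else 0 :: real) = real (card {l \<in> Fvecs n. dot n l u = zu u})"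
      unfolding card_filter[OF finite_Fvecs] of_nat_sum by (intro sum.cong) auto
    finally have e: "(\<Sum>l\<in>Fvecs n. if dot n u (\<lambda>i. c i + d * l i) = 0 \<and> rk F n u = j then 1 else 0 :: real)
       = (if rk F n u = j then real (card {l \<in> Fvecs n. dot n l u = zu u}) else 0)" .
    show ?thesis
    proof (cases "rk F n u = j")
      case False then show ?thesis using e by simp
    next
      case True
      show ?thesis
      proof (cases "zu u \<in> Fspan F (u ` {..<n})")
        case True2: True
        have "real (card {l \<in> Fvecs n. dot n l u = zu u}) * real q ^ rk F n u = real q ^ n"
          using fiber[OF True2] by (metis of_nat_mult of_nat_power)
        then show ?thesis using e True True2 by simp
      next
        case False2: False
        have "{l \<in> Fvecs n. dot n l u = zu u} = {}"
        proof (rule equals0I)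
          fix l assume "l \<in> {l \<in> Fvecs n. dot n l u = zu u}"
          then have "zu u \<in> Fspan F (u ` {..<n})" using dot_in_V[of l n u] by simp
          then show False using False2 by simp
        qed
        then have "card {l \<in> Fvecs n. dot n l u = zu u} = 0" by (simp only: card.empty)
        then show ?thesis using e True False2 by simp
      qed
    qed
  qed
  have "real q ^ j * (\<Sum>l\<in>Fvecs n. real (cnt n (\<lambda>i. c i + d * l i) j))
      = (\<Sum>u\<in>vecs n. (\<Sum>l\<in>Fvecs n. if dot n u (\<lambda>i. c i + d * l i) = 0 \<and> rk F n u = j then 1 else 0) * real q ^ j)"
    unfolding cnt_sum sum_distrib_left sum_distrib_right
    by (subst sum.swap) (simp add: mult.commute)
  also have "\<dots> = (\<Sum>u\<in>vecs n. if zu u \<in> Fspan F (u ` {..<n}) \<and> rk F n u = j then real q ^ n else 0)"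
    by (simp only: per_u)
  also have "\<dots> = real q ^ n * real (hcnt n c d j)"
    unfolding hcnt_sum zu_def by (rule sum_if_c)
  finally show ?thesis by (simp add: mult.commute)
qed


lemma K_card: "card {\<mu> \<in> Fvecs n. dot n \<mu> x = 0} * q ^ rk F n x = q ^ n"
  by (rule fiber[OF span_0])

lemma span_Fvec:
  assumes mu: "\<mu> \<in> Fvecs n" "\<mu> \<noteq> (\<lambda>_. 0)"
  shows "Fspan F (\<mu> ` {..<n}) = F"
proof
  show "Fspan F (\<mu> ` {..<n}) \<subseteq> F"
    by (rule span_minimal) (use mu(1) in \<open>auto simp: Fvecs_def intro: F0 Fadd Fmul\<close>)
  obtain i where i: "\<mu> i \<noteq> 0" using mu(2) by auto
  have i2: "i < n"
  proof (rule ccontr)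
    assume "\<not> i < n"
    then have "\<mu> i = 0" using mu(1) unfolding Fvecs_def vecs_def by simp
    then show False using i by simp
  qed
  have mi: "\<mu> i \<in> F" using mu(1) i2 by (simp add: Fvecs_def)
  show "F \<subseteq> Fspan F (\<mu> ` {..<n})"
  proof
    fix a assume a: "a \<in> F"
    have "(a * inverse (\<mu> i)) * \<mu> i \<in> Fspan F (\<mu> ` {..<n})"
      using a mi i2 by (intro span_smul Fmul Finv span_sup) auto
    moreover have "(a * inverse (\<mu> i)) * \<mu> i = a" using i by (simp add: field_simps)
    ultimately show "a \<in> Fspan F (\<mu> ` {..<n})" by simp
  qed
qed

lemma K_Fvec:
  assumes mu: "\<mu> \<in> Fvecs n" "\<mu> \<noteq> (\<lambda>_. 0)"
  shows "card {l \<in> Fvecs n. dot n l \<mu> = 0} * q = q ^ n"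
proof -
  have "q ^ rk F n \<mu> = q ^ 1" using rk_card[of \<mu> n] span_Fvec[OF mu] cardF by simp
  then have "rk F n \<mu> = 1" by (rule pow_inj)
  then show ?thesis using K_card[of n \<mu>] by (simp add: dot_comm)
qed

lemma K_cdl:
  assumes d: "d \<notin> Fspan F (c ` {..<n})" and l: "l \<in> Fvecs n"
  shows "{\<mu> \<in> Fvecs n. dot n \<mu> (\<lambda>i. c i + d * l i) = 0}
       = {\<mu> \<in> Fvecs n. dot n \<mu> c = 0 \<and> dot n l \<mu> = 0}"
proof (rule set_eqI, rule iffI)
  fix \<mu> assume "\<mu> \<in> {\<mu> \<in> Fvecs n. dot n \<mu> (\<lambda>i. c i + d * l i) = 0}"
  then have mu: "\<mu> \<in> Fvecs n" and e: "dot n \<mu> c + d * dot n l \<mu> = 0" by (simp_all add: dot_cdl)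
  have a: "dot n l \<mu> \<in> F" using l mu by (rule dot_F)
  have "dot n l \<mu> = 0"
  proof (rule ccontr)
    assume a0: "dot n l \<mu> \<noteq> 0"
    have "d = (- inverse (dot n l \<mu>)) * dot n \<mu> c"
      using e a0 by (simp add: field_simps eq_neg_iff_add_eq_0)
    moreover have "(- inverse (dot n l \<mu>)) * dot n \<mu> c \<in> Fspan F (c ` {..<n})"
      using a mu by (intro span_smul Fneg Finv dot_in_V)
    ultimately show False using d by simp
  qed
  then show "\<mu> \<in> {\<mu> \<in> Fvecs n. dot n \<mu> c = 0 \<and> dot n l \<mu> = 0}" using mu e by simp
qed (simp add: dot_cdl)

lemma cdl_vecs: "c \<in> vecs n \<Longrightarrow> l \<in> Fvecs n \<Longrightarrow> (\<lambda>i. c i + d * l i) \<in> vecs n"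
  by (simp add: vecs_def Fvecs_def)

lemma rk_cdl:
  assumes d: "d \<notin> Fspan F (c ` {..<n})" and l: "l \<in> Fvecs n"
  shows "rk F n c \<le> rk F n (\<lambda>i. c i + d * l i) \<and> rk F n (\<lambda>i. c i + d * l i) \<le> Suc (rk F n c)"
proof
  define K where "K = {\<mu> \<in> Fvecs n. dot n \<mu> c = 0}"
  define K' where "K' = {\<mu> \<in> Fvecs n. dot n \<mu> (\<lambda>i. c i + d * l i) = 0}"
  have sub: "K' \<subseteq> K" unfolding K_def K'_def K_cdl[OF d l] by auto
  have "card K' \<le> card K" using sub finite_Fvecs by (intro card_mono) (auto simp: K_def)
  then have "card K' * q ^ rk F n (\<lambda>i. c i + d * l i) \<le> card K * q ^ rk F n (\<lambda>i. c i + d * l i)"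
    by simp
  then have "card K * q ^ rk F n c \<le> card K * q ^ rk F n (\<lambda>i. c i + d * l i)"
    using K_card[of n c] K_card[of n "\<lambda>i. c i + d * l i"] unfolding K_def K'_def by simp
  moreover have "0 < card K"
  proof -
    have "(\<lambda>_. 0) \<in> K" using F0 by (simp add: K_def Fvecs_def vecs_def dot_def)
    then show ?thesis using finite_Fvecs by (auto simp: K_def card_gt_0_iff)
  qed
  ultimately have "q ^ rk F n c \<le> q ^ rk F n (\<lambda>i. c i + d * l i)" by simp
  then show "rk F n c \<le> rk F n (\<lambda>i. c i + d * l i)" by (rule pow_le)
next
  have "Fspan F ((\<lambda>i. c i + d * l i) ` {..<n}) \<subseteq> Fspan F (insert d (c ` {..<n}))"
  proof (rule span_subset, rule subsetI)
    fix x assume "x \<in> (\<lambda>i. c i + d * l i) ` {..<n}"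
    then obtain i where i: "i < n" "x = c i + d * l i" by blast
    have "c i \<in> Fspan F (insert d (c ` {..<n}))" using i by (intro span_sup) auto
    moreover have "l i * d \<in> Fspan F (insert d (c ` {..<n}))"
      using l i by (intro span_smul span_sup) (auto simp: Fvecs_def)
    ultimately show "x \<in> Fspan F (insert d (c ` {..<n}))" using i by (simp add: span_add mult.commute)
  qed
  then have "card (Fspan F ((\<lambda>i. c i + d * l i) ` {..<n})) \<le> card (Fspan F (insert d (c ` {..<n})))"
    by (intro card_mono) auto
  then have "q ^ rk F n (\<lambda>i. c i + d * l i) \<le> q ^ Suc (rk F n c)"
    using card_span_insert_notin[OF d] rk_card by simp
  then show "rk F n (\<lambda>i. c i + d * l i) \<le> Suc (rk F n c)" by (rule pow_le)
qed


lemma sum_if_set: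
  assumes "finite A"
  shows "(\<Sum>x\<in>A. if P x then a else b) = real (card {x \<in> A. P x}) * a + (real (card A) - real (card {x \<in> A. P x})) * (b::real)"
proof -
  have "(\<Sum>x\<in>A. if P x then a else b) = (\<Sum>x\<in>A \<inter> {x. P x}. a) + (\<Sum>x\<in>A \<inter> - {x. P x}. b)"
    by (rule sum.If_cases[OF assms])
  moreover have "A \<inter> {x. P x} = {x \<in> A. P x}" "A \<inter> - {x. P x} = A - {x \<in> A. P x}" by auto
  moreover have "card (A - {x \<in> A. P x}) = card A - card {x \<in> A. P x}"
    using assms by (intro card_Diff_subset) auto
  moreover have "card {x \<in> A. P x} \<le> card A" using assms by (intro card_mono) auto
  ultimately show ?thesis by (simp add: of_nat_diff)
qed

lemma Nr:
  assumes c: "c \<in> vecs n" and d: "d \<notin> Fspan F (c ` {..<n})"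
  shows "real (card {l \<in> Fvecs n. rk F n (\<lambda>i. c i + d * l i) = rk F n c}) = real q ^ rk F n c"
proof -
  define r where "r = rk F n c"
  define Nr where "Nr = real (card {l \<in> Fvecs n. rk F n (\<lambda>i. c i + d * l i) = r})"
  define Kc where "Kc = {\<mu> \<in> Fvecs n. dot n \<mu> c = 0}"
  define Q where "Q = real q"
  have Q0: "Q > 1" using q2 by (simp add: Q_def)
  have "real (card Kc * q ^ r) = real (q ^ n)"
    using K_card[of n c] unfolding Kc_def r_def by (simp only:)
  then have "real (card Kc) * Q ^ r = Q ^ n" unfolding Q_def by simp
  then have Kc_card: "real (card Kc) = Q ^ n / Q ^ r"
    using Q0 by (simp add: eq_divide_eq)
  have K'_card: "real (card {\<mu> \<in> Fvecs n. dot n \<mu> (\<lambda>i. c i + d * l i) = 0})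
      = Q ^ n / Q ^ rk F n (\<lambda>i. c i + d * l i)" for l
  proof -
    have "real (card {\<mu> \<in> Fvecs n. dot n \<mu> (\<lambda>i. c i + d * l i) = 0} * q ^ rk F n (\<lambda>i. c i + d * l i))
       = real (q ^ n)"
      using K_card[of n "\<lambda>i. c i + d * l i"] by (simp only:)
    then have "real (card {\<mu> \<in> Fvecs n. dot n \<mu> (\<lambda>i. c i + d * l i) = 0}) * Q ^ rk F n (\<lambda>i. c i + d * l i) = Q ^ n"
      unfolding Q_def by simp
    then show ?thesis using Q0 by (simp add: eq_divide_eq)
  qed
  define S1 where "S1 = (\<Sum>l\<in>Fvecs n. real (card {\<mu> \<in> Fvecs n. dot n \<mu> (\<lambda>i. c i + d * l i) = 0}))"
  have "S1 = (\<Sum>l\<in>Fvecs n. if rk F n (\<lambda>i. c i + d * l i) = r then Q ^ n / Q ^ r else Q ^ n / Q ^ Suc r)"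
    unfolding S1_def
  proof (rule sum.cong[OF refl])
    fix l assume l: "l \<in> Fvecs n"
    show "real (card {\<mu> \<in> Fvecs n. dot n \<mu> (\<lambda>i. c i + d * l i) = 0})
      = (if rk F n (\<lambda>i. c i + d * l i) = r then Q ^ n / Q ^ r else Q ^ n / Q ^ Suc r)"
    proof (cases "rk F n (\<lambda>i. c i + d * l i) = r")
      case True then show ?thesis using K'_card[of l] by simp
    next
      case False
      then have "rk F n (\<lambda>i. c i + d * l i) = Suc r" using rk_cdl[OF d l] unfolding r_def by linarith
      then show ?thesis using K'_card[of l] by simp
    qed
  qed
  also have "\<dots> = Nr * (Q ^ n / Q ^ r) + (Q ^ n - Nr) * (Q ^ n / Q ^ Suc r)"
    unfolding sum_if_set[OF finite_Fvecs] Nr_def card_Fvecs Q_def by simp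
  finally have S1a: "S1 = Nr * (Q ^ n / Q ^ r) + (Q ^ n - Nr) * (Q ^ n / Q ^ Suc r)" .
  have "S1 = (\<Sum>l\<in>Fvecs n. \<Sum>\<mu>\<in>Kc. if dot n l \<mu> = 0 then 1 else 0)"
    unfolding S1_def
  proof (rule sum.cong[OF refl])
    fix l assume l: "l \<in> Fvecs n"
    have "{\<mu> \<in> Fvecs n. dot n \<mu> (\<lambda>i. c i + d * l i) = 0} = {\<mu> \<in> Kc. dot n l \<mu> = 0}"
      unfolding K_cdl[OF d l] Kc_def by auto
    moreover have "finite Kc" using finite_Fvecs by (simp add: Kc_def)
    ultimately show "real (card {\<mu> \<in> Fvecs n. dot n \<mu> (\<lambda>i. c i + d * l i) = 0})
       = (\<Sum>\<mu>\<in>Kc. if dot n l \<mu> = 0 then 1 else 0)"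
      by (simp add: card_filter of_nat_sum if_distrib cong: if_cong)
  qed
  also have "\<dots> = (\<Sum>\<mu>\<in>Kc. \<Sum>l\<in>Fvecs n. if dot n l \<mu> = 0 then 1 else 0)"
    by (rule sum.swap)
  also have "\<dots> = (\<Sum>\<mu>\<in>Kc. if \<mu> = (\<lambda>_. 0) then Q ^ n else Q ^ n / Q)"
  proof (rule sum.cong[OF refl])
    fix \<mu> assume mu: "\<mu> \<in> Kc"
    have e: "(\<Sum>l\<in>Fvecs n. if dot n l \<mu> = 0 then 1 else 0 :: real) = real (card {l \<in> Fvecs n. dot n l \<mu> = 0})"
      by (simp add: card_filter[OF finite_Fvecs] of_nat_sum if_distrib cong: if_cong)
    show "(\<Sum>l\<in>Fvecs n. if dot n l \<mu> = 0 then 1 else 0) = (if \<mu> = (\<lambda>_. 0) then Q ^ n else Q ^ n / Q)"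
    proof (cases "\<mu> = (\<lambda>_. 0)")
      case True
      then show ?thesis using e card_Fvecs[of n] by (simp add: dot_def Q_def)
    next
      case False
      have mu': "\<mu> \<in> Fvecs n" using mu by (simp add: Kc_def)
      have "real (card {l \<in> Fvecs n. dot n l \<mu> = 0} * q) = real (q ^ n)"
        using K_Fvec[OF mu' False] by (simp only:)
      then have "real (card {l \<in> Fvecs n. dot n l \<mu> = 0}) * Q = Q ^ n"
        unfolding Q_def by simp
      then show ?thesis using e False Q0 by (simp add: field_simps)
    qed
  qed
  also have "\<dots> = Q ^ n + (real (card Kc) - 1) * (Q ^ n / Q)"
  proof -
    have z: "(\<lambda>_. 0) \<in> Kc" using F0 by (simp add: Kc_def Fvecs_def vecs_def dot_def)
    have fK: "finite Kc" using finite_Fvecs by (simp add: Kc_def)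
    have "(\<Sum>\<mu>\<in>Kc. if \<mu> = (\<lambda>_. 0) then Q ^ n else Q ^ n / Q)
       = Q ^ n + (\<Sum>\<mu>\<in>Kc - {\<lambda>_. 0}. if \<mu> = (\<lambda>_. 0) then Q ^ n else Q ^ n / Q)"
      by (subst sum.remove[OF fK z]) simp
    also have "(\<Sum>\<mu>\<in>Kc - {\<lambda>_. 0}. if \<mu> = (\<lambda>_. 0) then Q ^ n else Q ^ n / Q) = (\<Sum>\<mu>\<in>Kc - {\<lambda>_. 0}. Q ^ n / Q)"
      by (rule sum.cong) auto
    also have "\<dots> = (real (card Kc) - 1) * (Q ^ n / Q)"
    proof -
      have "card Kc \<noteq> 0" using z fK by auto
      then have "card Kc \<ge> 1" by simp
      then have "real (card (Kc - {\<lambda>_. 0})) = real (card Kc) - 1"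
        using z fK by (simp add: card_Diff_singleton of_nat_diff)
      then show ?thesis by simp
    qed
    finally show ?thesis .
  qed
  finally have S1b: "S1 = Q ^ n + (Q ^ n / Q ^ r - 1) * (Q ^ n / Q)" unfolding Kc_card .
  have "(Nr - Q ^ r) * ((Q - 1) * Q ^ n / (Q * Q ^ r)) = 0"
  proof -
    have "(Nr - Q ^ r) * ((Q - 1) * Q ^ n / (Q * Q ^ r))
        = Nr * (Q ^ n / Q ^ r) + (Q ^ n - Nr) * (Q ^ n / Q ^ Suc r) - (Q ^ n + (Q ^ n / Q ^ r - 1) * (Q ^ n / Q))"
      using Nr_alg[of Q "Q ^ r" Nr "Q ^ n"] Q0 by simp
    then show ?thesis using S1a S1b by simp
  qed
  moreover have "(Q - 1) * Q ^ n / (Q * Q ^ r) \<noteq> 0" using Q0 by simp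
  ultimately have "Nr = Q ^ r" by simp
  then show ?thesis unfolding Nr_def r_def Q_def .
qed


lemma rk_empty: "rk F 0 u = 0"
proof -
  have "q ^ rk F 0 u = q ^ 0" using rk_card[of u 0] by (simp add: span_empty)
  then show ?thesis by (rule pow_inj)
qed

lemma rk_zero: "rk F n (\<lambda>_. 0) = 0"
proof (cases n)
  case 0 then show ?thesis by (simp add: rk_empty)
next
  case (Suc n')
  then have "(\<lambda>_. 0::'a) ` {..<n} = insert 0 {}" by auto
  then have "Fspan F ((\<lambda>_. 0::'a) ` {..<n}) = {0}"
    using span_insert_in[of 0 "{}"] span_0 span_empty by simp
  then have "q ^ rk F n (\<lambda>_. 0) = q ^ 0" using rk_card[of "\<lambda>_. 0" n] by simp
  then show ?thesis by (rule pow_inj)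
qed

lemma zero_vecs: "(\<lambda>_. 0) \<in> vecs n"
  by (simp add: vecs_def)

lemma main:
  assumes "c \<in> vecs n"
  shows "real (cnt n c k) = Phi (real q) (int m) n (rk F n c) (int k)"
  using assms
proof (induction n arbitrary: c k)
  case 0
  then have c: "c = (\<lambda>_. 0)" by (simp add: vecs_0)
  have "{u \<in> vecs 0. dot 0 u c = 0 \<and> rk F 0 u = k} = (if k = 0 then {\<lambda>_. 0} else {})"
    by (auto simp: vecs_0 dot_def rk_empty)
  then have "real (cnt 0 c k) = (if k = 0 then 1 else 0)" by (simp add: cnt_def)
  moreover have "Phi (real q) (int m) 0 0 (int k) = (if k = 0 then 1 else 0)"
    using q_pos by (simp add: Phi_base)
  ultimately show ?case by (simp add: rk_empty)
next
  case (Suc n)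
  define c0 where "c0 = c(n := 0)"
  define d where "d = c n"
  have cc: "c = c0(n := d)" by (simp add: c0_def d_def)
  have c0v: "c0 \<in> vecs n" using Suc.prems by (auto simp: c0_def vecs_def)
  define r where "r = rk F n c0"
  have rn: "r \<le> n" unfolding r_def by (rule rk_le)
  have q0: "real q \<noteq> 0" using q_pos by simp
  show ?case
  proof (cases "d \<in> Fspan F (c0 ` {..<n})")
    case True
    have rkc: "rk F (Suc n) c = r" unfolding cc r_def rk_Suc using True by simp
    have "real (cnt (Suc n) c k) = real q ^ k * real (cnt n c0 k)
     + (if k = 0 then 0 else (real q ^ m - real q ^ (k - 1)) * real (cnt n c0 (k - 1)))"
      unfolding cc C2[OF c0v True] by (rule C1[OF c0v])
    also have "\<dots> = Phi (real q) (int m) (Suc n) r (int k)"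
    proof (cases k)
      case 0
      have "Phi (real q) (int m) (Suc n) r 0 = Phi (real q) (int m) n r 0"
        using R1[OF q0 rn, of "int m" 0] by (simp add: Phi_neg)
      then show ?thesis using 0 Suc.IH[OF c0v] unfolding r_def by simp
    next
      case (Suc k')
      have e1: "int k - 1 = int k'" using Suc by simp
      have "Phi (real q) (int m) (Suc n) r (int k) = real q powi int k * Phi (real q) (int m) n r (int k)
          + (real q powi int m - real q powi (int k - 1)) * Phi (real q) (int m) n r (int k - 1)"
        by (rule R1[OF q0 rn])
      also have "\<dots> = real q ^ k * Phi (real q) (int m) n r (int k)
          + (real q ^ m - real q ^ (k - 1)) * Phi (real q) (int m) n r (int (k - 1))"
        unfolding e1 power_int_of_nat using Suc by simp
      finally show ?thesis using Suc.IH[OF c0v] Suc unfolding r_def by simp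
    qed
    finally show ?thesis unfolding rkc .
  next
    case False
    have rkc: "rk F (Suc n) c = Suc r" unfolding cc r_def rk_Suc using False by simp
    have d0: "d \<noteq> 0" using False span_0 by blast
    define H where "H = (\<lambda>j. real q powi (j - int n) * (real q ^ r * Phi (real q) (int m) n r j
       + (real q ^ n - real q ^ r) * Phi (real q) (int m) n (Suc r) j))"
    have hH: "real (hcnt n c0 d j) = H (int j)" for j
    proof -
      have "(\<Sum>l\<in>Fvecs n. real (cnt n (\<lambda>i. c0 i + d * l i) j))
         = (\<Sum>l\<in>Fvecs n. if rk F n (\<lambda>i. c0 i + d * l i) = r then Phi (real q) (int m) n r (int j)
              else Phi (real q) (int m) n (Suc r) (int j))"
      proof (rule sum.cong[OF refl])
        fix l assume l: "l \<in> Fvecs n"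
        have e: "real (cnt n (\<lambda>i. c0 i + d * l i) j) = Phi (real q) (int m) n (rk F n (\<lambda>i. c0 i + d * l i)) (int j)"
          by (rule Suc.IH[OF cdl_vecs[OF c0v l]])
        show "real (cnt n (\<lambda>i. c0 i + d * l i) j) = (if rk F n (\<lambda>i. c0 i + d * l i) = r then Phi (real q) (int m) n r (int j)
              else Phi (real q) (int m) n (Suc r) (int j))"
        proof (cases "rk F n (\<lambda>i. c0 i + d * l i) = r")
          case True then show ?thesis using e by simp
        next
          case False
          then have "rk F n (\<lambda>i. c0 i + d * l i) = Suc r"
            using rk_cdl[OF \<open>d \<notin> Fspan F (c0 ` {..<n})\<close> l] unfolding r_def by linarith
          then show ?thesis using e by simp
        qed
      qed
      also have "\<dots> = real q ^ r * Phi (real q) (int m) n r (int j)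
          + (real q ^ n - real q ^ r) * Phi (real q) (int m) n (Suc r) (int j)"
        unfolding sum_if_set[OF finite_Fvecs] Nr[OF c0v False, folded r_def] card_Fvecs by simp
      finally have S: "(\<Sum>l\<in>Fvecs n. real (cnt n (\<lambda>i. c0 i + d * l i) j)) = real q ^ r * Phi (real q) (int m) n r (int j)
          + (real q ^ n - real q ^ r) * Phi (real q) (int m) n (Suc r) (int j)" .
      define X where "X = real q ^ r * Phi (real q) (int m) n r (int j)
          + (real q ^ n - real q ^ r) * Phi (real q) (int m) n (Suc r) (int j)"
      have "real (hcnt n c0 d j) * real q ^ n = real q ^ j * X"
        using C3b[OF d0, of n c0 j] unfolding S X_def .
      then have hx: "real (hcnt n c0 d j) = real q ^ j * X / real q ^ n"
        using q0 by (simp add: eq_divide_eq)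
      have pw: "real q powi (int j - int n) = real q ^ j / real q ^ n"
        using q0 by (simp add: power_int_diff)
      show ?thesis unfolding H_def pw hx X_def[symmetric] by simp
    qed
    have z: "real (cnt n (\<lambda>_. 0) j) = Phi (real q) (int m) n 0 (int j)" for j
      using Suc.IH[OF zero_vecs, of j] by (simp add: rk_zero)
    have "real (cnt (Suc n) c k) = real (hcnt n c0 d k)
      + (if k = 0 then 0 else real (cnt n (\<lambda>_. 0) (k - 1)) - real (hcnt n c0 d (k - 1)))"
      unfolding cc by (rule C3a[OF c0v False])
    also have "\<dots> = H (int k) + Phi (real q) (int m) n 0 (int k - 1) - H (int k - 1)"
    proof (cases k)
      case 0
      then show ?thesis by (simp add: hH H_def Phi_neg)
    next
      case (Suc k')
      have "int k - 1 = int k'" using Suc by simp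
      then show ?thesis using Suc by (simp add: hH z)
    qed
    also have "\<dots> = Phi (real q) (int m) (Suc n) (Suc r) (int k)"
      unfolding H_def by (rule R2[OF q0 rn, symmetric])
    finally show ?thesis unfolding rkc .
  qed
qed

end



lemma perp_span1: "perp n (span1 v) = {u \<in> vecs n. dot n u v = 0}"
proof -
  have "(\<forall>s\<in>span1 v. (\<Sum>i<n. u i * s i) = 0) \<longleftrightarrow> dot n u v = 0" for u
  proof
    assume "\<forall>s\<in>span1 v. (\<Sum>i<n. u i * s i) = 0"
    moreover have "(\<lambda>i. 1 * v i) \<in> span1 v" unfolding span1_def by blast
    ultimately show "dot n u v = 0" unfolding dot_def by fastforce
  next
    assume "dot n u v = 0"
    then show "\<forall>s\<in>span1 v. (\<Sum>i<n. u i * s i) = 0"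
      unfolding span1_def dot_def
      by (auto simp: sum_distrib_left[symmetric] mult.left_commute)
  qed
  then show ?thesis unfolding perp_def by auto
qed

lemma sum_group_rk:
  fixes g :: "nat \<Rightarrow> real"
  assumes fin: "finite A" and le: "\<And>u. u \<in> A \<Longrightarrow> h u \<le> n"
  shows "(\<Sum>u\<in>A. g (h u)) = (\<Sum>k\<le>n. real (card {u \<in> A. h u = k}) * g k)"
proof -
  have "(\<Sum>u\<in>A. g (h u)) = (\<Sum>u\<in>A. \<Sum>k\<le>n. if h u = k then g k else 0)"
    using le by (intro sum.cong) (auto simp: sum.delta)
  also have "\<dots> = (\<Sum>k\<le>n. \<Sum>u\<in>A. if h u = k then g k else 0)"
    by (rule sum.swap)
  also have "\<dots> = (\<Sum>k\<le>n. real (card {u \<in> A. h u = k}) * g k)"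
  proof (rule sum.cong[OF refl])
    fix k
    have "(\<Sum>u\<in>A. if h u = k then g k else 0) = g k * (\<Sum>u\<in>A. if h u = k then 1 else 0)"
      by (rule sum_if_c)
    also have "(\<Sum>u\<in>A. if h u = k then 1 else 0) = real (card {u \<in> A. h u = k})"
      unfolding card_filter[OF fin] of_nat_sum by (intro sum.cong) auto
    finally show "(\<Sum>u\<in>A. if h u = k then g k else 0) = real (card {u \<in> A. h u = k}) * g k"
      by simp
  qed
  finally show ?thesis .
qed

theorem proposition1:
  fixes F :: "'a::{field,finite} set" and q m n :: nat and v :: "nat \<Rightarrow> 'a"
    and x y :: real
  assumes "is_subfield F"
    and "card F = q"
    and "card (UNIV :: 'a set) = q ^ m"
    and "v \<in> vecs n"
  shows "rank_weight_enum F n (perp n (span1 v)) x y =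
    ((real q) powi (- int m)) *
      (hp_eval (qpow (real q) (hp_A (real q)) n) (int m) x y
       + (real q ^ m - 1) *
         hp_eval (qprod (real q) (qpow (real q) hp_B (rk F n v))
                                 (qpow (real q) (hp_A (real q)) (n - rk F n v))) (int m) x y)"
proof -
  interpret sfm F q m
    using assms(1-3) by unfold_locales auto
  define r where "r = rk F n v"
  have rn: "r \<le> n" unfolding r_def by (rule rk_le)
  define L where "L = {u \<in> vecs n. dot n u v = 0}"
  have finL: "finite L" unfolding L_def by (rule finite_subset[OF _ finite_vecs[of n]]) auto
  have "rank_weight_enum F n (perp n (span1 v)) x y = (\<Sum>u\<in>L. y ^ rk F n u * x ^ (n - rk F n u))"
    unfolding rank_weight_enum_def perp_span1 L_def ..
  also have "\<dots> = (\<Sum>k\<le>n. real (card {u \<in> L. rk F n u = k}) * (y ^ k * x ^ (n - k)))"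
    by (rule sum_group_rk[OF finL, of "\<lambda>u. rk F n u" n "\<lambda>k. y ^ k * x ^ (n - k)"]) (rule rk_le)
  also have "\<dots> = (\<Sum>k\<le>n. Phi (real q) (int m) n r (int k) * (y ^ k * x ^ (n - k)))"
  proof (rule sum.cong[OF refl])
    fix k
    have "{u \<in> L. rk F n u = k} = {u \<in> vecs n. dot n u v = 0 \<and> rk F n u = k}"
      unfolding L_def by auto
    then have "real (card {u \<in> L. rk F n u = k}) = real (cnt n v k)" unfolding cnt_def by simp
    also have "\<dots> = Phi (real q) (int m) n r (int k)" unfolding r_def by (rule main[OF assms(4)])
    finally show "real (card {u \<in> L. rk F n u = k}) * (y ^ k * x ^ (n - k))
        = Phi (real q) (int m) n r (int k) * (y ^ k * x ^ (n - k))" by simp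
  qed
  also have "\<dots> = ((real q) powi (- int m)) *
      (hp_eval (qpow (real q) (hp_A (real q)) n) (int m) x y
       + (real q ^ m - 1) *
         hp_eval (qprod (real q) (qpow (real q) hp_B r)
                                 (qpow (real q) (hp_A (real q)) (n - r))) (int m) x y)"
  proof -
    have f: "fst (qprod (real q) (qpow (real q) hp_B r) (qpow (real q) (hp_A (real q)) (n - r))) = n"
      using rn by simp
    define c where "c = real q powi (- int m)"
    define a where "a k = snd (qpow (real q) (hp_A (real q)) n) k (int m)" for k
    define p where "p k = snd (qprod (real q) (qpow (real q) hp_B r) (qpow (real q) (hp_A (real q)) (n - r))) k (int m)" for k
    define w where "w k = y ^ k * x ^ (n - k)" for k
    have "(\<Sum>k\<le>n. Phi (real q) (int m) n r (int k) * (y ^ k * x ^ (n - k)))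
        = (\<Sum>k\<le>n. c * (a k * w k) + c * (real q ^ m - 1) * (p k * w k))"
      by (rule sum.cong) (simp_all add: Phi_def a_def p_def w_def c_def algebra_simps)
    also have "\<dots> = c * (\<Sum>k\<le>n. a k * w k) + c * (real q ^ m - 1) * (\<Sum>k\<le>n. p k * w k)"
      by (simp add: sum.distrib sum_distrib_left)
    also have "\<dots> = ((real q) powi (- int m)) *
      (hp_eval (qpow (real q) (hp_A (real q)) n) (int m) x y
       + (real q ^ m - 1) *
         hp_eval (qprod (real q) (qpow (real q) hp_B r)
                                 (qpow (real q) (hp_A (real q)) (n - r))) (int m) x y)"
      unfolding hp_eval_def f qpow_fst hpA_fst
      by (simp add: a_def p_def w_def c_def algebra_simps)
    finally show ?thesis .
  qed
  finally show ?thesis unfolding r_def .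
qed


end
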